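(* For every admissible index $i$ (i.e. $1\le i\le n$ if $s>n-1$, and $2\le i\le n$ if $s=n-1$), the irreducible component $K^i$ of $Y$ is given by \[ K^i=\{V_\bullet\in \mathrm{Fl}(1^n,s-1)\ \mid\ V_{i-1}\subseteq \mathrm{im}(x)\subseteq V_n\subseteq x^{-1}V_{i-1}\}, \] where $x^{-1}V_{i-1}$ denotes the preimage of $V_{i-1}$ under the linear map $x$.
   Context: Fix integers $n\ge 2$ and $s\ge n-1$, let $N=n+s-1$, and let $e_1,\dots,e_N$ be the standard basis of $\mathbb{C}^N$. Let $x:\mathbb{C}^N\to\mathbb{C}^N$ be the linear map with $xe_m=e_{m-(n-1)}$ for $n\le m\le 2n-2$ and $xe_m=0$ otherwise; thus $\mathrm{im}(x)=\mathrm{span}(e_1,\dots,e_{n-1})$ and $x$ is nilpotent of Jordan type $(2^{n-1},1^{s-n+1})$. Let $\mathrm{Fl}(1^n,s-1)$ be the variety of partial flags $V_\bullet=(0=V_0\subset V_1\subset\cdots\subset V_n\subset\mathbb{C}^N)$ with $\dim V_j=j$. The $\Delta$-Springer fiber is the closed subvariety $Y=Y_{n,(1^{n-1}),s}=\{V_\bullet\in\mathrm{Fl}(1^n,s-1)\mid \mathrm{im}(x)\subseteq V_n,\ xV_j\subseteq V_j \text{ for all } j\}$. For a sequence $w=(w_1,\dots,w_n)$ of distinct elements of $\{1,\dots,N\}$, the Schubert cell $X_w^\circ\subseteq \mathrm{Fl}(1^n,s-1)$ is the set of flags with $\dim(V_j\cap\mathrm{span}(e_1,\dots,e_m))=\#\{l\le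 j: w_l\le m\}$ for all $j,m$. For an admissible $i$ (namely $1\le i\le n$ if $s>n-1$, and $2\le i\le n$ if $s=n-1$) put $w^{(i)}=(n-1,n-2,\dots,n-i+1,\,N,\,n-i,n-i-1,\dots,1)$ and define $K^i$ to be the closure in $Y$ of $X^\circ_{w^{(i)}}\cap Y$. (It is known that these $K^i$ are exactly the irreducible components of $Y$, and that $Y$ has dimension $\binom{n-1}{2}+(s-1)$.) *)

theory Defs
  imports Complex_Main "HOL-Library.Function_Algebras"
begin

text \<open>Vectors of C^N are modelled as functions nat => complex supported on {1..N};
  the standard basis vector e_m is the indicator of m.\<close>

type_synonym cvec = "nat \<Rightarrow> complex"

definition cscale :: "complex \<Rightarrow> cvec \<Rightarrow> cvec" where
  "cscale c v = (\<lambda>k. c * v k)"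

interpretation cvs: vector_space cscale
  by unfold_locales (auto simp: cscale_def fun_eq_iff algebra_simps)

definition CN :: "nat \<Rightarrow> cvec set" where
  "CN N = {v. \<forall>k. (k < 1 \<or> N < k) \<longrightarrow> v k = 0}"

definition e :: "nat \<Rightarrow> cvec" where
  "e m = (\<lambda>k. if k = m then 1 else 0)"

definition Espan :: "nat \<Rightarrow> cvec set" where
  "Espan m = cvs.span (e ` {1..m})"

text \<open>The nilpotent map x: x e_m = e_(m-(n-1)) for n <= m <= 2n-2, x e_m = 0 otherwise.\<close>
definition xmap :: "nat \<Rightarrow> cvec \<Rightarrow> cvec" where
  "xmap n v = (\<lambda>k. if 1 \<le> k \<and> k \<le> n - 1 then v (k + (n - 1)) else 0)"

definition Fl :: "nat \<Rightarrow> nat \<Rightarrow> (nat \<Rightarrow> cvec set) set" where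
  "Fl N n = {V. (\<forall>j\<le>n. cvs.subspace (V j) \<and> V j \<subseteq> CN N \<and> cvs.dim (V j) = j)
               \<and> (\<forall>j<n. V j \<subseteq> V (Suc j)) \<and> (\<forall>j>n. V j = {0})}"

definition Yfib :: "nat \<Rightarrow> nat \<Rightarrow> (nat \<Rightarrow> cvec set) set" where
  "Yfib n s = {V \<in> Fl (n + s - 1) n.
      xmap n ` CN (n + s - 1) \<subseteq> V n \<and> (\<forall>j\<le>n. xmap n ` V j \<subseteq> V j)}"

text \<open>Schubert cell X_w^o for a sequence w = [w_1,...,w_n] (a list, w_l = w ! (l-1)).\<close>
definition schubert_cell :: "nat \<Rightarrow> nat \<Rightarrow> nat list \<Rightarrow> (nat \<Rightarrow> cvec set) set" where
  "schubert_cell N n w = {V \<in> Fl N n. \<forall>j\<le>n. \<forall>m\<le>N.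
      cvs.dim (V j \<inter> Espan m) = card {l. 1 \<le> l \<and> l \<le> j \<and> w ! (l - 1) \<le> m}}"

definition flag_of :: "nat \<Rightarrow> (nat \<Rightarrow> cvec) \<Rightarrow> (nat \<Rightarrow> cvec set)" where
  "flag_of n u = (\<lambda>j. if j \<le> n then cvs.span (u ` {1..j}) else {0})"

text \<open>Closure in the (classical) topology of Fl(1^n,s-1): the flag variety carries the quotient
  topology from the space of frames (n-tuples of vectors of C^N, with the Euclidean topology of
  their coordinates); since this quotient map is open, F lies in the closure of A iff some frame
  of F is a coordinatewise limit of frames of flags in A.\<close>
definition flag_closure :: "nat \<Rightarrow> nat \<Rightarrow> (nat \<Rightarrow> cvec set) set \<Rightarrow> (nat \<Rightarrow> cvec set) set" where
  "flag_closure N n A = {F \<in> Fl N n. \<exists>U u. (\<forall>k. flag_of n (U k) \<in> A) \<and> flag_of n u = F \<and>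
      (\<forall>j m. (\<lambda>k. U k j m) \<longlonglongrightarrow> u j m)}"

definition wi :: "nat \<Rightarrow> nat \<Rightarrow> nat \<Rightarrow> nat list" where
  "wi N n i = rev [n - i + 1..<n] @ [N] @ rev [1..<n - i + 1]"

definition Kcomp :: "nat \<Rightarrow> nat \<Rightarrow> nat \<Rightarrow> (nat \<Rightarrow> cvec set) set" where
  "Kcomp n s i = Yfib n s \<inter>
     flag_closure (n + s - 1) n (schubert_cell (n + s - 1) n (wi (n + s - 1) n i) \<inter> Yfib n s)"

end

theory Submission
  imports Defs
begin


lemma sum_fun_apply: "(sum f A) x = (\<Sum>a\<in>A. f a x)" for f :: "'b \<Rightarrow> nat \<Rightarrow> complex"
  by (induct A rule: infinite_finite_induct) auto

definition lc :: "'a set \<Rightarrow> ('a \<Rightarrow> complex) \<Rightarrow> ('a \<Rightarrow> cvec) \<Rightarrow> cvec" where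
  "lc S c f = (\<lambda>m. \<Sum>l\<in>S. c l * f l m)"

lemma sum_cscale_lc: "(\<Sum>l\<in>S. cscale (c l) (f l)) = lc S c f"
  by (auto simp: lc_def fun_eq_iff sum_fun_apply cscale_def)

lemma lc_in_span: "finite S \<Longrightarrow> lc S c f \<in> cvs.span (f ` S)"
  unfolding sum_cscale_lc[symmetric]
  by (intro cvs.span_sum cvs.span_scale cvs.span_base) auto

lemma subspace_range_lc: "cvs.subspace (range (\<lambda>c. lc S c f))"
  unfolding cvs.subspace_def
proof (intro conjI ballI allI)
  have "lc S (\<lambda>_. 0) f = 0" by (simp add: lc_def fun_eq_iff)
  then show "0 \<in> range (\<lambda>c. lc S c f)" by (metis rangeI)
  fix x y assume "x \<in> range (\<lambda>c. lc S c f)" "y \<in> range (\<lambda>c. lc S c f)"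
  then obtain c d where "x = lc S c f" "y = lc S d f" by auto
  then have "x + y = lc S (\<lambda>l. c l + d l) f" by (auto simp: lc_def fun_eq_iff sum.distrib algebra_simps)
  then show "x + y \<in> range (\<lambda>c. lc S c f)" by (metis rangeI)
next
  fix a x assume "x \<in> range (\<lambda>c. lc S c f)"
  then obtain c where "x = lc S c f" by auto
  then have "cscale a x = lc S (\<lambda>l. a * c l) f" by (auto simp: lc_def fun_eq_iff sum_distrib_left cscale_def algebra_simps)
  then show "cscale a x \<in> range (\<lambda>c. lc S c f)" by (metis rangeI)
qed

lemma span_image_lc:
  assumes "finite S"
  shows "cvs.span (f ` S) = range (\<lambda>c. lc S c f)"
proof
  show "range (\<lambda>c. lc S c f) \<subseteq> cvs.span (f ` S)" using lc_in_span[OF assms] by auto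
  show "cvs.span (f ` S) \<subseteq> range (\<lambda>c. lc S c f)"
  proof
    fix y assume "y \<in> cvs.span (f ` S)"
    then show "y \<in> range (\<lambda>c. lc S c f)"
    proof (induct rule: cvs.span_induct)
      case base
      show ?case using subspace_range_lc by simp
    next
      case (step x)
      then obtain l where l: "l \<in> S" "x = f l" by auto
      have "x = lc S (\<lambda>k. if k = l then 1 else 0) f"
      proof
        fix m
        have "(\<Sum>k\<in>S. (if k = l then 1 else 0) * f k m) = (\<Sum>k\<in>S. if k = l then f k m else 0)"
          by (rule sum.cong) auto
        then show "x m = lc S (\<lambda>k. if k = l then 1 else 0) f m" using l assms by (simp add: lc_def)
      qed
      then show ?case by (metis rangeI)
    qed
  qed
qed

lemma in_span_image_iff: "finite S \<Longrightarrow> y \<in> cvs.span (f ` S) \<longleftrightarrow> (\<exists>c. y = lc S c f)"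
  using span_image_lc[of S f] by auto

definition supp :: "nat \<Rightarrow> cvec set" where
  "supp m = {v. \<forall>k. (k < 1 \<or> m < k) \<longrightarrow> v k = 0}"

lemma e_apply: "e m k = (if k = m then 1 else 0)" by (simp add: e_def)

lemma subspace_supp: "cvs.subspace (supp m)"
  by (auto simp: cvs.subspace_def supp_def cscale_def)

lemma Espan_eq: "Espan m = supp m"
proof
  show "Espan m \<subseteq> supp m" unfolding Espan_def
    by (rule cvs.span_minimal[OF _ subspace_supp]) (auto simp: supp_def e_def)
  show "supp m \<subseteq> Espan m"
  proof
    fix v assume v: "v \<in> supp m"
    have "v = lc {1..m} v e"
    proof
      fix k show "v k = lc {1..m} v e k"
      proof (cases "1 \<le> k \<and> k \<le> m")
        case True then show ?thesis by (auto simp: lc_def e_def if_distrib sum.delta cong: if_cong)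
      next
        case False
        then have "v k = 0" using v by (cases "k = 0") (auto simp: supp_def)
        moreover have "lc {1..m} v e k = 0" using False by (auto simp: lc_def e_def intro!: sum.neutral)
        ultimately show ?thesis by simp
      qed
    qed
    then show "v \<in> Espan m" unfolding Espan_def using lc_in_span[of "{1..m}" v e] by simp
  qed
qed

lemma CN_eq: "CN N = supp N" by (auto simp: CN_def supp_def)

lemma supp_mono: "a \<le> b \<Longrightarrow> supp a \<subseteq> supp b" by (auto simp: supp_def)

lemma supp_0: "supp 0 = {0}" by (auto simp: supp_def fun_eq_iff)

lemma e_inj: "inj_on e A" by (auto simp: inj_on_def e_def fun_eq_iff)

lemma indep_e: "cvs.independent (e ` A)"
proof -
  have "\<And>B u. finite B \<Longrightarrow> B \<subseteq> e ` A \<Longrightarrow> (\<Sum>v\<in>B. cscale (u v) v) = 0 \<Longrightarrow> \<forall>v\<in>B. u v = 0"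
  proof (intro ballI)
    fix B u v assume B: "finite B" "B \<subseteq> e ` A" and s: "(\<Sum>v\<in>B. cscale (u v) v) = 0" and v: "v \<in> B"
    from v B obtain a where a: "v = e a" by auto
    have "(\<Sum>w\<in>B. cscale (u w) w) a = u v"
    proof -
      have "(\<Sum>w\<in>B. cscale (u w) w) a = (\<Sum>w\<in>B. u w * w a)" by (simp add: sum_fun_apply cscale_def)
      also have "\<dots> = (\<Sum>w\<in>B. if w = v then u v else 0)"
      proof (rule sum.cong)
        fix w assume w: "w \<in> B"
        then obtain b where b: "w = e b" using B by auto
        have "w = v \<longleftrightarrow> a = b" using a b by (auto simp: e_def fun_eq_iff)
        then show "u w * w a = (if w = v then u v else 0)"
          using a b by (auto simp: e_def)
      qed simp
      also have "\<dots> = u v" using B v by simp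
      finally show ?thesis .
    qed
    then show "u v = 0" using s by simp
  qed
  then show ?thesis unfolding cvs.independent_explicit_finite_subsets by blast
qed

lemma dim_Espan: "cvs.dim (Espan m) = m"
  unfolding Espan_def cvs.dim_span
  using cvs.dim_eq_card_independent[OF indep_e[of "{1..m}"]] card_image[OF e_inj[of "{1..m}"]] by simp

definition FD :: "cvec set \<Rightarrow> bool" where "FD V \<longleftrightarrow> (\<exists>W. finite W \<and> V \<subseteq> cvs.span W)"

lemma FD_supp: "FD (supp m)"
  unfolding FD_def Espan_eq[symmetric] Espan_def by blast

lemma FD_subset: "FD B \<Longrightarrow> A \<subseteq> B \<Longrightarrow> FD A" unfolding FD_def by blast

lemma FD_basis:
  assumes "FD V"
  obtains B where "finite B" "B \<subseteq> V" "cvs.independent B" "V \<subseteq> cvs.span B" "card B = cvs.dim V"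
proof -
  obtain W where W: "finite W" "V \<subseteq> cvs.span W" using assms FD_def by auto
  obtain B where B: "B \<subseteq> V" "cvs.independent B" "V \<subseteq> cvs.span B" "card B = cvs.dim V"
    using cvs.basis_exists by blast
  have "finite B" using cvs.independent_span_bound[OF W(1) B(2)] B(1) W(2) by auto
  then show ?thesis using B that by auto
qed

lemma dim_mono: assumes "FD B" "A \<subseteq> B" shows "cvs.dim A \<le> cvs.dim B"
proof -
  obtain C where C: "finite C" "C \<subseteq> B" "cvs.independent C" "B \<subseteq> cvs.span C" "card C = cvs.dim B"
    using FD_basis[OF assms(1)] by blast
  show ?thesis using cvs.dim_le_card[of A C] C assms(2) by auto
qed

lemma dim_eq_subset:
  assumes "FD B" "A \<subseteq> B" "cvs.subspace A" "cvs.dim B \<le> cvs.dim A"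
  shows "A = B"
proof (rule ccontr)
  assume "A \<noteq> B"
  then obtain b where b: "b \<in> B" "b \<notin> A" using assms(2) by auto
  have FA: "FD A" using FD_subset assms by blast
  obtain C where C: "finite C" "C \<subseteq> A" "cvs.independent C" "A \<subseteq> cvs.span C" "card C = cvs.dim A"
    using FD_basis[OF FA] by blast
  have "cvs.span C \<subseteq> A" using C(2) assms(3) by (simp add: cvs.span_minimal)
  then have "b \<notin> cvs.span C" using b by auto
  then have ind: "cvs.independent (insert b C)" using C(3) by (rule cvs.independent_insertI)
  obtain W where W: "finite W" "B \<subseteq> cvs.span W" using assms(1) FD_def by auto
  have "insert b C \<subseteq> B" using b C assms(2) by auto
  then have "card (insert b C) \<le> cvs.dim B"
    using dim_mono[OF assms(1), of "insert b C"] cvs.dim_eq_card_independent[OF ind] by simp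
  moreover have "b \<notin> C" using \<open>b \<notin> cvs.span C\<close> cvs.span_base[of b C] by auto
  then have "card (insert b C) = card C + 1" using C(1) by simp
  ultimately show False using C(5) assms(4) by simp
qed

lemma dim_insert_le:
  assumes "FD A" "V \<subseteq> cvs.span (insert a A)"
  shows "cvs.dim V \<le> cvs.dim A + 1"
proof -
  obtain C where C: "finite C" "C \<subseteq> A" "cvs.independent C" "A \<subseteq> cvs.span C" "card C = cvs.dim A"
    using FD_basis[OF assms(1)] by blast
  have "cvs.span (insert a A) \<subseteq> cvs.span (insert a C)"
  proof -
    have "insert a A \<subseteq> cvs.span (insert a C)"
      using C(4) cvs.span_mono[of C "insert a C"] cvs.span_base[of a "insert a C"] by auto
    then show ?thesis using cvs.span_mono cvs.span_span by metis
  qed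
  then have "cvs.dim V \<le> card (insert a C)" using assms(2) C(1) by (intro cvs.dim_le_card) auto
  then show ?thesis using C card_insert_le_m1 by (simp add: card_insert_if split: if_splits)
qed


definition indep :: "'a set \<Rightarrow> ('a \<Rightarrow> cvec) \<Rightarrow> bool" where
  "indep S f \<longleftrightarrow> (\<forall>c. lc S c f = 0 \<longrightarrow> (\<forall>l\<in>S. c l = 0))"

lemma lc_apply: "lc S c f m = (\<Sum>l\<in>S. c l * f l m)" by (simp add: lc_def)

lemma indep_inj: assumes "finite S" "indep S f" shows "inj_on f S"
proof (rule inj_onI, rule ccontr)
  fix a b assume ab: "a \<in> S" "b \<in> S" "f a = f b" "a \<noteq> b"
  define c where "c = (\<lambda>l. if l = a then (1::complex) else if l = b then -1 else 0)"
  have "lc S c f = 0"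
  proof
    fix m
    have "(\<Sum>l\<in>S. c l * f l m) = (\<Sum>l\<in>S. (if l = a then f a m else 0) + (if l = b then - f b m else 0))"
    proof (rule sum.cong)
      fix l assume "l \<in> S"
      show "c l * f l m = (if l = a then f a m else 0) + (if l = b then - f b m else 0)"
        unfolding c_def using ab(4) by (cases "l = a"; cases "l = b") auto
    qed simp
    also have "\<dots> = f a m - f b m" using ab(1,2) assms(1) by (simp add: sum.distrib)
    also have "\<dots> = 0" using ab(3) by simp
    finally show "lc S c f m = 0 m" by (simp add: lc_def)
  qed
  then have "\<forall>l\<in>S. c l = 0" using assms(2) unfolding indep_def by blast
  then have "c a = 0" using ab(1) by blast
  then show False by (simp add: c_def)
qed

lemma lc_image: assumes "inj_on f S"
  shows "(\<Sum>x\<in>f ` S. cscale (g x) x) = lc S (\<lambda>l. g (f l)) f"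
  unfolding sum_cscale_lc[symmetric] using sum.reindex[OF assms, of "\<lambda>x. cscale (g x) x"] by simp

lemma indep_independent: assumes "finite S" "indep S f"
  shows "cvs.independent (f ` S)"
proof (rule cvs.independent_if_scalars_zero)
  show "finite (f ` S)" using assms by simp
  fix g x assume "(\<Sum>x\<in>f ` S. cscale (g x) x) = 0" "x \<in> f ` S"
  then show "g x = 0" using lc_image[OF indep_inj[OF assms], of g] assms(2) by (auto simp: indep_def)
qed

lemma indep_dim: assumes "finite S" "indep S f"
  shows "cvs.dim (cvs.span (f ` S)) = card S"
  using cvs.dim_span_eq_card_independent[OF indep_independent[OF assms]]
    card_image[OF indep_inj[OF assms]] by simp

lemma dim_indep: assumes "finite S" "cvs.dim (cvs.span (f ` S)) = card S"
  shows "indep S f"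
proof -
  let ?V = "f ` S"
  obtain B where B: "B \<subseteq> ?V" "cvs.independent B" "?V \<subseteq> cvs.span B" "card B = cvs.dim ?V"
    using cvs.basis_exists by blast
  have cV: "card ?V \<le> card S" using assms(1) card_image_le by blast
  have "card B = card S" using B(4) assms(2) by simp
  then have "B = ?V" using card_seteq[OF finite_imageI[OF assms(1)] B(1)] cV by simp
  then have indV: "cvs.independent ?V" using B(2) by simp
  have "card ?V = card S" using \<open>B = ?V\<close> \<open>card B = card S\<close> by simp
  then have inj: "inj_on f S" using assms(1) eq_card_imp_inj_on by blast
  show ?thesis unfolding indep_def
  proof (intro allI impI ballI)
    fix c l assume c: "lc S c f = 0" and l: "l \<in> S"
    let ?g = "\<lambda>x. c (the_inv_into S f x)"
    have "(\<Sum>x\<in>?V. cscale (?g x) x) = lc S (\<lambda>l. ?g (f l)) f" by (rule lc_image[OF inj])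
    also have "\<dots> = lc S c f" unfolding lc_def
      using the_inv_into_f_f[OF inj] by (intro ext sum.cong) simp_all
    finally have "(\<Sum>x\<in>?V. cscale (?g x) x) = 0" using c by simp
    moreover have H: "\<forall>Sa\<subseteq>?V. finite Sa \<longrightarrow> (\<forall>u. (\<Sum>v\<in>Sa. cscale (u v) v) = 0 \<longrightarrow> (\<forall>v\<in>Sa. u v = 0))"
      using indV by (simp only: cvs.independent_explicit_finite_subsets)
    ultimately have "?g (f l) = 0"
      using H[rule_format, OF order_refl finite_imageI[OF assms(1)], of ?g "f l"] l by blast
    then show "c l = 0" using the_inv_into_f_f[OF inj l] by simp
  qed
qed


lemma dim_zero_set: "cvs.dim {0} = 0"
  using cvs.dim_le_card[of "{0}" "{}"] by (simp add: cvs.span_empty)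

lemma subspace_zero_eq: "cvs.subspace A \<Longrightarrow> A \<subseteq> {0} \<Longrightarrow> A = {0}"
  using cvs.subspace_0 by auto

lemma hyper_step:
  assumes A: "cvs.subspace A" "A \<subseteq> supp m"
  shows "cvs.dim (A \<inter> supp (m - 1)) \<le> cvs.dim A"
    and "cvs.dim A \<le> cvs.dim (A \<inter> supp (m - 1)) + 1"
proof -
  have FA: "FD A" using FD_subset[OF FD_supp A(2)] .
  show "cvs.dim (A \<inter> supp (m - 1)) \<le> cvs.dim A" using dim_mono[OF FA] by auto
  show "cvs.dim A \<le> cvs.dim (A \<inter> supp (m - 1)) + 1"
  proof (cases "A \<subseteq> supp (m - 1)")
    case True
    then have "A \<inter> supp (m - 1) = A" by auto
    then show ?thesis by simp
  next
    case False
    then obtain a0 where a0: "a0 \<in> A" "a0 \<notin> supp (m - 1)" by auto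
    have a0m: "a0 \<in> supp m" using a0 A by auto
    obtain k where k: "k < 1 \<or> m - 1 < k" "a0 k \<noteq> 0" using a0(2) by (auto simp: supp_def)
    have "1 \<le> k \<and> k \<le> m"
    proof (rule ccontr)
      assume "\<not> (1 \<le> k \<and> k \<le> m)"
      then have "k < 1 \<or> m < k" by auto
      then have "a0 k = 0" using a0m unfolding supp_def by blast
      then show False using k(2) by simp
    qed
    then have "k = m" using k(1) by linarith
    then have nz: "a0 m \<noteq> 0" using k by simp
    have "A \<subseteq> cvs.span (insert a0 (A \<inter> supp (m - 1)))"
    proof
      fix a assume a: "a \<in> A"
      define c where "c = a m / a0 m"
      have am: "a \<in> supp m" using a A by auto
      have d: "a - cscale c a0 \<in> A" using a a0 A(1)
        by (simp add: cvs.subspace_diff cvs.subspace_scale)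
      have "a - cscale c a0 \<in> supp (m - 1)"
        unfolding supp_def mem_Collect_eq
      proof (intro allI impI)
        fix k assume k: "k < 1 \<or> m - 1 < k"
        consider "k = m" | "k < 1 \<or> m < k" using k by linarith
        then show "(a - cscale c a0) k = 0"
        proof cases
          case 1 then show ?thesis using nz by (simp add: c_def cscale_def)
        next
          case 2
          then have "a k = 0" "a0 k = 0" using am a0m unfolding supp_def by blast+
          then show ?thesis by (simp add: cscale_def)
        qed
      qed
      then have "a - cscale c a0 \<in> cvs.span (insert a0 (A \<inter> supp (m - 1)))"
        using d by (intro cvs.span_base) auto
      moreover have "cscale c a0 \<in> cvs.span (insert a0 (A \<inter> supp (m - 1)))"
        by (intro cvs.span_scale cvs.span_base) auto
      ultimately have "(a - cscale c a0) + cscale c a0 \<in> cvs.span (insert a0 (A \<inter> supp (m - 1)))"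
        by (rule cvs.span_add)
      then show "a \<in> cvs.span (insert a0 (A \<inter> supp (m - 1)))" by simp
    qed
    then show ?thesis using dim_insert_le[OF FD_subset[OF FA]] by auto
  qed
qed

lemma transversal_dim:
  assumes S: "cvs.subspace S" "S \<subseteq> supp q" "cvs.dim S = r" "r \<le> q" "S \<inter> supp (q - r) \<subseteq> {0}"
  shows "cvs.dim (S \<inter> supp m) = min r (r + m - q)"
proof -
  define d where "d k = cvs.dim (S \<inter> supp k)" for k
  have sub: "cvs.subspace (S \<inter> supp k)" for k
    using S(1) subspace_supp by (rule cvs.subspace_inter)
  have int: "S \<inter> supp k \<inter> supp k' = S \<inter> supp k'" if "k' \<le> k" for k k'
    using supp_mono[OF that] by auto
  have FS: "FD (S \<inter> supp k)" for k using FD_subset[OF FD_supp] by blast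
  have step: "d k \<le> d (k - 1) + 1" "d (k - 1) \<le> d k" for k
    using hyper_step[OF sub, of k k] int[of "k - 1" k] by (auto simp: d_def)
  have dq: "d q = r" using S(2,3) by (simp add: d_def Int_absorb2)
  have d0: "d (q - r) = 0"
    using subspace_zero_eq[OF sub S(5)] dim_zero_set by (simp add: d_def)
  have up: "d (q - r + k) \<le> k" for k
  proof (induct k)
    case 0 then show ?case using d0 by simp
  next
    case (Suc k)
    then show ?case using step(1)[of "q - r + Suc k"] by simp
  qed
  have down: "j \<le> q \<Longrightarrow> r \<le> d (q - j) + j" for j
  proof (induct j)
    case 0 then show ?case using dq by simp
  next
    case (Suc j)
    then have "r \<le> d (q - j) + j" by simp
    moreover have "d (q - j) \<le> d (q - Suc j) + 1" using step(1)[of "q - j"] Suc(2)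
      by (simp add: Suc_diff_Suc numeral_2_eq_2)
    ultimately show ?case by simp
  qed
  show ?thesis
  proof (cases "q \<le> m")
    case True
    then have "S \<inter> supp m = S" using S(2) supp_mono[OF True] by auto
    then show ?thesis using S(3) True by simp
  next
    case False
    show ?thesis
    proof (cases "m \<le> q - r")
      case True
      have "d m \<le> d (q - r)" using dim_mono[OF FS, of "S \<inter> supp m" "q - r"] supp_mono[OF True]
        by (auto simp: d_def)
      then show ?thesis using d0 True S(4) by (simp add: d_def)
    next
      case False2: False
      have "d m \<le> m - (q - r)" using up[of "m - (q - r)"] False2 by simp
      moreover have "r \<le> d m + (q - m)" using down[of "q - m"] False by simp
      ultimately show ?thesis using False False2 by (simp add: d_def)
    qed
  qed
qed

lemma indep_subset: assumes "finite S" "T \<subseteq> S" "indep S f" shows "indep T f"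
  unfolding indep_def
proof (intro allI impI ballI)
  fix c l assume c: "lc T c f = 0" and l: "l \<in> T"
  let ?c = "\<lambda>k. if k \<in> T then c k else 0"
  have "lc S ?c f = lc T c f" unfolding lc_def
  proof (intro ext)
    fix m
    have "(\<Sum>l\<in>S. (if l \<in> T then c l else 0) * f l m) = (\<Sum>l\<in>S. if l \<in> T then c l * f l m else 0)"
      by (rule sum.cong) auto
    also have "\<dots> = (\<Sum>l\<in>S \<inter> T. c l * f l m)" using assms(1) by (simp add: sum.inter_restrict)
    also have "S \<inter> T = T" using assms(2) by auto
    finally show "(\<Sum>l\<in>S. (if l \<in> T then c l else 0) * f l m) = (\<Sum>l\<in>T. c l * f l m)" by simp
  qed
  then have "lc S ?c f = 0" using c by simp
  then have "\<forall>l\<in>S. ?c l = 0" using assms(3) unfolding indep_def by blast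
  then have "?c l = 0" using l assms(2) by blast
  then show "c l = 0" using l by simp
qed

lemma flag_of_le: "j \<le> n \<Longrightarrow> flag_of n u j = cvs.span (u ` {1..j})"
  by (simp add: flag_of_def)

lemma subspace_CN: "cvs.subspace (CN N)" by (simp add: CN_eq subspace_supp)

lemma flag_of_Fl:
  assumes "\<forall>l\<in>{1..n}. u l \<in> CN N" "indep {1..n} u"
  shows "flag_of n u \<in> Fl N n"
  unfolding Fl_def mem_Collect_eq
proof (intro conjI allI impI)
  fix j assume j: "j \<le> n"
  show "cvs.subspace (flag_of n u j)" unfolding flag_of_le[OF j] by (rule cvs.subspace_span)
  have "u ` {1..j} \<subseteq> CN N" using assms(1) j by auto
  then show "flag_of n u j \<subseteq> CN N" unfolding flag_of_le[OF j]
    using cvs.span_minimal subspace_CN by blast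
  have "indep {1..j} u" using indep_subset[of "{1..n}" "{1..j}" u] assms(2) j by auto
  then have "cvs.dim (cvs.span (u ` {1..j})) = card {1..j}" by (intro indep_dim) auto
  then show "cvs.dim (flag_of n u j) = j" unfolding flag_of_le[OF j] by simp
next
  fix j assume j: "j < n"
  have "u ` {1..j} \<subseteq> u ` {1..Suc j}" by auto
  then have "cvs.span (u ` {1..j}) \<subseteq> cvs.span (u ` {1..Suc j})" by (rule cvs.span_mono)
  then show "flag_of n u j \<subseteq> flag_of n u (Suc j)" using j by (simp add: flag_of_le)
next
  fix j assume "n < j" then show "flag_of n u j = {0}" by (simp add: flag_of_def)
qed

lemma Fl_flag_of:
  assumes "flag_of n u \<in> Fl N n" "j \<le> n"
  shows "indep {1..j} u" and "\<forall>l\<in>{1..j}. u l \<in> CN N"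
proof -
  have "cvs.dim (flag_of n u j) = j" using assms unfolding Fl_def by auto
  then have "cvs.dim (cvs.span (u ` {1..j})) = card {1..j}" using assms(2) by (simp add: flag_of_le)
  then show "indep {1..j} u" by (intro dim_indep) auto
  have "flag_of n u j \<subseteq> CN N" using assms unfolding Fl_def by auto
  then have "cvs.span (u ` {1..j}) \<subseteq> CN N" using assms(2) by (simp add: flag_of_le)
  then show "\<forall>l\<in>{1..j}. u l \<in> CN N" using cvs.span_base[of _ "u ` {1..j}"] by blast
qed


definition lift :: "nat \<Rightarrow> cvec \<Rightarrow> cvec" where
  "lift n y = (\<lambda>k. if n \<le> k \<and> k \<le> 2 * (n - 1) then y (k - (n - 1)) else 0)"

lemma xmap_apply: "xmap n v k = (if 1 \<le> k \<and> k \<le> n - 1 then v (k + (n - 1)) else 0)"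
  by (simp add: xmap_def)

lemma xmap_add: "xmap n (a + b) = xmap n a + xmap n b"
  by (auto simp: xmap_def fun_eq_iff)

lemma xmap_diff: "xmap n (a - b) = xmap n a - xmap n b"
  by (auto simp: xmap_def fun_eq_iff)

lemma xmap_scale: "xmap n (cscale c a) = cscale c (xmap n a)"
  by (auto simp: xmap_def fun_eq_iff cscale_def)

lemma xmap_zero: "xmap n 0 = 0"
  by (auto simp: xmap_def fun_eq_iff)

lemma xmap_lc: "xmap n (lc S c f) = lc S c (\<lambda>l. xmap n (f l))"
  by (auto simp: xmap_def fun_eq_iff lc_def)

lemma xmap_supp: "xmap n v \<in> supp (n - 1)"
  by (auto simp: xmap_def supp_def)

lemma xmap_kill: "v \<in> supp (n - 1) \<Longrightarrow> xmap n v = 0"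
  by (auto simp: xmap_def supp_def fun_eq_iff)

lemma xmap_lift: "y \<in> supp (n - 1) \<Longrightarrow> xmap n (lift n y) = y"
  unfolding xmap_def lift_def supp_def
proof (intro ext)
  fix k assume y: "y \<in> {v. \<forall>k. (k < 1 \<or> n - 1 < k) \<longrightarrow> v k = 0}"
  show "(if 1 \<le> k \<and> k \<le> n - 1 then (if n \<le> k + (n - 1) \<and> k + (n - 1) \<le> 2 * (n - 1) then y (k + (n - 1) - (n - 1)) else 0) else 0) = y k"
  proof (cases "1 \<le> k \<and> k \<le> n - 1")
    case True then show ?thesis by auto
  next
    case False then have "k < 1 \<or> n - 1 < k" by auto
    then show ?thesis using y False by auto
  qed
qed

lemma lift_CN: "1 \<le> n \<Longrightarrow> 2 * (n - 1) \<le> N \<Longrightarrow> lift n y \<in> CN N"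
  by (auto simp: lift_def CN_def)

lemma I_eq:
  assumes "1 \<le> n" "2 * (n - 1) \<le> N"
  shows "xmap n ` CN N = supp (n - 1)"
proof
  show "xmap n ` CN N \<subseteq> supp (n - 1)" using xmap_supp by auto
  show "supp (n - 1) \<subseteq> xmap n ` CN N"
  proof
    fix y assume "y \<in> supp (n - 1)"
    then have "y = xmap n (lift n y)" by (simp add: xmap_lift)
    then show "y \<in> xmap n ` CN N" using lift_CN[OF assms] by blast
  qed
qed

lemma xmap_span_sub:
  assumes "xmap n ` G \<subseteq> T" "cvs.subspace T"
  shows "xmap n ` cvs.span G \<subseteq> T"
proof
  fix z assume "z \<in> xmap n ` cvs.span G"
  then obtain y where y: "y \<in> cvs.span G" "z = xmap n y" by auto
  have "xmap n y \<in> T" using y(1)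
  proof (induct rule: cvs.span_induct)
    case base
    have "cvs.subspace {y. xmap n y \<in> T}"
      unfolding cvs.subspace_def using assms(2)
      by (auto simp: xmap_zero xmap_add xmap_scale cvs.subspace_0 cvs.subspace_add cvs.subspace_scale)
    then show ?case by simp
  next
    case (step x) then show ?case using assms(1) by auto
  qed
  then show "z \<in> T" using y by simp
qed

lemma wi_nth:
  assumes "1 \<le> l" "l \<le> n" "1 \<le> i" "i \<le> n"
  shows "wi N n i ! (l - 1) = (if l < i then n - l else if l = i then N else n + 1 - l)"
proof -
  have len: "length (rev [n - i + 1..<n]) = i - 1" using assms by simp
  show ?thesis
  proof (cases "l < i")
    case True
    have "l - 1 < length (rev [n - i + 1..<n])" using len True assms by simp
    then have "wi N n i ! (l - 1) = rev [n - i + 1..<n] ! (l - 1)"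
      unfolding wi_def by (rule nth_append_left)
    also have "\<dots> = n - l" using True assms by (simp add: rev_nth)
    finally show ?thesis using True by simp
  next
    case False
    show ?thesis
    proof (cases "l = i")
      case True
      have "wi N n i ! (l - 1) = (rev [n - i + 1..<n] @ [N] @ rev [1..<n - i + 1]) ! length (rev [n - i + 1..<n])"
        unfolding wi_def using len True by simp
      then show ?thesis using True by (simp only: append_Cons nth_append_length) simp
    next
      case False2: False
      then have li: "i < l" using False by simp
      have e1: "l - 1 = length (rev [n - i + 1..<n]) + (Suc (l - 1 - i))" using len li assms by simp
      have "wi N n i ! (l - 1) = ((rev [n - i + 1..<n] @ [N] @ rev [1..<n - i + 1]) ! (length (rev [n - i + 1..<n]) + (Suc (l - 1 - i))))"
        unfolding wi_def using e1 by (rule arg_cong)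
      also have "\<dots> = ([N] @ rev [1..<n - i + 1]) ! Suc (l - 1 - i)" by (rule nth_append_length_plus)
      also have "\<dots> = rev [1..<n - i + 1] ! (l - 1 - i)" by simp
      finally have "wi N n i ! (l - 1) = rev [1..<n - i + 1] ! (l - 1 - i)" .
      also have "\<dots> = n + 1 - l"
      proof -
        have k: "l - 1 - i < length [1..<n - i + 1]" using li assms by (simp only: length_upt)
        have "rev [1..<n - i + 1] ! (l - 1 - i) = [1..<n - i + 1] ! (length [1..<n - i + 1] - Suc (l - 1 - i))"
          by (rule rev_nth[OF k])
        also have "\<dots> = 1 + (length [1..<n - i + 1] - Suc (l - 1 - i))"
          by (rule nth_upt) (use k in \<open>simp only: length_upt\<close>, linarith)
        finally show ?thesis using li assms by (simp only: length_upt) linarith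
      qed
      finally show ?thesis using li by simp
    qed
  qed
qed

definition cnt :: "nat \<Rightarrow> nat \<Rightarrow> nat \<Rightarrow> nat \<Rightarrow> nat \<Rightarrow> nat" where
  "cnt N n i j m = card {l. 1 \<le> l \<and> l \<le> j \<and> wi N n i ! (l - 1) \<le> m}"

lemma cnt_Suc: "cnt N n i (Suc j) m = cnt N n i j m + (if wi N n i ! j \<le> m then 1 else 0)"
proof -
  let ?P = "\<lambda>l. wi N n i ! (l - 1) \<le> m"
  have eq: "{l. 1 \<le> l \<and> l \<le> Suc j \<and> ?P l} = {l. 1 \<le> l \<and> l \<le> j \<and> ?P l} \<union> (if ?P (Suc j) then {Suc j} else {})"
    by (auto simp: le_Suc_eq)
  have fin: "finite {l. 1 \<le> l \<and> l \<le> j \<and> ?P l}" by (rule finite_subset[of _ "{..j}"]) auto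
  show ?thesis unfolding cnt_def eq using fin by (auto simp: card_insert_if)
qed

lemma cnt_formula:
  assumes "1 \<le> i" "i \<le> n" "n \<le> N" "j \<le> n"
  shows "cnt N n i j m = (if j < i then min j (j + m - (n - 1)) else if N \<le> m then j
      else min (j - 1) (j - 1 + m - (n - 1)))"
  using assms(4)
proof (induct j)
  case 0 then show ?case using assms by (simp add: cnt_def)
next
  case (Suc j)
  have w: "wi N n i ! j = (if Suc j < i then n - Suc j else if Suc j = i then N else n + 1 - Suc j)"
    using wi_nth[of "Suc j" n i N] Suc(2) assms by simp
  have IH: "cnt N n i j m = (if j < i then min j (j + m - (n - 1)) else if N \<le> m then j
      else min (j - 1) (j - 1 + m - (n - 1)))" using Suc by simp
  show ?case unfolding cnt_Suc IH w using assms Suc(2) by (auto split: if_splits)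
qed


lemma supp_pred: assumes "v \<in> supp m" "1 \<le> m" shows "v \<in> supp (m - 1) \<longleftrightarrow> v m = 0"
proof
  assume "v \<in> supp (m - 1)" then show "v m = 0" using assms(2) by (auto simp: supp_def)
next
  assume vm: "v m = 0"
  show "v \<in> supp (m - 1)" unfolding supp_def mem_Collect_eq
  proof (intro allI impI)
    fix k assume "k < 1 \<or> m - 1 < k"
    then consider "k = m" | "k < 1 \<or> m < k" by linarith
    then show "v k = 0" using vm assms(1) unfolding supp_def by cases blast+
  qed
qed

lemma Fl_props:
  assumes "V \<in> Fl N n" "j \<le> n"
  shows "cvs.subspace (V j)" "V j \<subseteq> CN N" "cvs.dim (V j) = j" "FD (V j)"
  using assms unfolding Fl_def by (auto intro: FD_subset[OF FD_supp] simp: CN_eq)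

lemma Fl_mono:
  assumes "V \<in> Fl N n" "j \<le> k" "k \<le> n"
  shows "V j \<subseteq> V k"
  using assms(2,3)
proof (induct k)
  case 0 then show ?case by simp
next
  case (Suc k)
  show ?case
  proof (cases "j = Suc k")
    case True then show ?thesis by simp
  next
    case False
    then have "V j \<subseteq> V k" using Suc by simp
    moreover have "V k \<subseteq> V (Suc k)" using assms(1) Suc(3) unfolding Fl_def by auto
    ultimately show ?thesis by blast
  qed
qed

lemma schubert_dim:
  assumes "V \<in> schubert_cell N n w" "j \<le> n" "m \<le> N"
  shows "cvs.dim (V j \<inter> supp m) = card {l. 1 \<le> l \<and> l \<le> j \<and> w ! (l - 1) \<le> m}"
  using assms unfolding schubert_cell_def Espan_eq by auto

lemma SY_in_Z:
  assumes N: "N = n + s - 1" and n2: "2 \<le> n" and s: "n - 1 \<le> s" and i: "1 \<le> i" "i \<le> n"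
    and F: "F \<in> schubert_cell N n (wi N n i)" "F \<in> Yfib n s"
  shows "F (i - 1) \<subseteq> supp (n - 1)" "supp (n - 1) \<subseteq> F n"
    "F n \<subseteq> {v \<in> CN N. xmap n v \<in> F (i - 1)}"
proof -
  let ?q = "n - 1"
  have NN: "2 * (n - 1) \<le> N" "n \<le> N" "?q < N" "\<not> N \<le> N - 1" "n - 1 \<le> N - 1" using N n2 s by auto
  have FFl: "F \<in> Fl N n" using F(1) unfolding schubert_cell_def by auto
  have Y: "xmap n ` CN N \<subseteq> F n" "\<forall>j\<le>n. xmap n ` F j \<subseteq> F j" using F(2) N unfolding Yfib_def by auto
  have I: "xmap n ` CN N = supp ?q" using I_eq NN n2 by simp
  have cntf: "cnt N n i j m = (if j < i then min j (j + m - ?q) else if N \<le> m then j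
      else min (j - 1) (j - 1 + m - ?q))" if "j \<le> n" for j m
    using cnt_formula[OF i NN(2) that] .
  have sd: "cvs.dim (F j \<inter> supp m) = cnt N n i j m" if "j \<le> n" "m \<le> N" for j m
    using schubert_dim[OF F(1) that] by (simp add: cnt_def)
  have d1: "cvs.dim (F (i - 1) \<inter> supp ?q) = i - 1" using sd[of "i - 1" ?q] cntf[of "i - 1" ?q] i NN by simp
  have "F (i - 1) \<inter> supp ?q = F (i - 1)"
    by (rule dim_eq_subset) (use Fl_props[OF FFl, of "i - 1"] i d1 in
        \<open>auto intro: cvs.subspace_inter subspace_supp\<close>)
  then show F1: "F (i - 1) \<subseteq> supp ?q" by blast
  show F2: "supp ?q \<subseteq> F n" using Y I by simp
  have d3: "cvs.dim (F n \<inter> supp (N - 1)) = n - 1" using sd[of n "N - 1"] cntf[of n "N - 1"] i NN by (simp add: min_def)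
  have F3: "supp ?q = F n \<inter> supp (N - 1)"
    by (rule dim_eq_subset)
       (use Fl_props[OF FFl, of n] d3 F2 supp_mono[of ?q "N - 1"] NN dim_Espan[of ?q] in
        \<open>auto simp: Espan_eq subspace_supp intro: FD_subset\<close>)
  have d4: "cvs.dim (F i \<inter> supp (N - 1)) = i - 1" using sd[of i "N - 1"] cntf[of i "N - 1"] i NN by (simp add: min_def split: if_splits; linarith)
  have Fi1i: "F (i - 1) \<subseteq> F i" using Fl_mono[OF FFl, of "i - 1" i] i by simp
  have F4: "F (i - 1) = F i \<inter> supp (N - 1)"
    by (rule dim_eq_subset)
       (use Fl_props[OF FFl, of i] Fl_props[OF FFl, of "i - 1"] d4 Fi1i F1 supp_mono[of ?q "N - 1"] NN i in
        \<open>auto intro: FD_subset\<close>)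
  have "\<not> F i \<subseteq> supp (N - 1)"
  proof
    assume "F i \<subseteq> supp (N - 1)"
    then have "F i = F (i - 1)" using F4 by auto
    moreover have "cvs.dim (F i) = i" using Fl_props(3)[OF FFl, of i] i by simp
    moreover have "cvs.dim (F (i - 1)) = i - 1" using Fl_props(3)[OF FFl, of "i - 1"] i by simp
    ultimately show False using i by simp
  qed
  then obtain v where v: "v \<in> F i" "v \<notin> supp (N - 1)" by auto
  have vCN: "v \<in> supp N" using v(1) Fl_props(2)[OF FFl, of i] i by (auto simp: CN_eq)
  have vN: "v N \<noteq> 0" using supp_pred[OF vCN] v(2) NN by auto
  have vn: "v \<in> F n" using v(1) Fl_mono[OF FFl, of i n] i by auto
  have xv: "xmap n v \<in> F (i - 1)"
  proof -
    have "xmap n v \<in> F i" using Y(2) v(1) i by auto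
    moreover have "xmap n v \<in> supp (N - 1)" using xmap_supp[of n v] supp_mono[of ?q "N - 1"] NN by auto
    ultimately show ?thesis using F4 by auto
  qed
  show "F n \<subseteq> {v \<in> CN N. xmap n v \<in> F (i - 1)}"
  proof
    fix y assume y: "y \<in> F n"
    have yCN: "y \<in> supp N" using y Fl_props(2)[OF FFl, of n] by (auto simp: CN_eq)
    define c where "c = y N / v N"
    let ?y' = "y - cscale c v"
    have "?y' \<in> F n" using y vn Fl_props(1)[OF FFl, of n]
      by (simp add: cvs.subspace_diff cvs.subspace_scale)
    moreover have "?y' \<in> supp N" using yCN vCN subspace_supp
      by (simp add: cvs.subspace_diff cvs.subspace_scale)
    moreover have "?y' N = 0" using vN by (simp add: c_def cscale_def)
    ultimately have "?y' \<in> F n \<inter> supp (N - 1)" using supp_pred NN by auto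
    then have "?y' \<in> supp ?q" using F3 by auto
    then have "xmap n ?y' = 0" by (rule xmap_kill)
    then have "xmap n y = cscale c (xmap n v)" by (simp add: xmap_diff xmap_scale)
    then have "xmap n y \<in> F (i - 1)" using xv Fl_props(1)[OF FFl, of "i - 1"] i
      by (simp add: cvs.subspace_scale)
    then show "y \<in> {v \<in> CN N. xmap n v \<in> F (i - 1)}" using yCN by (simp add: CN_eq)
  qed
qed

lemma Z_in_Y:
  assumes N: "N = n + s - 1" and n2: "2 \<le> n" and s: "n - 1 \<le> s" and i: "1 \<le> i" "i \<le> n"
    and V: "V \<in> Fl N n" "V (i - 1) \<subseteq> supp (n - 1)" "supp (n - 1) \<subseteq> V n"
      "V n \<subseteq> {v \<in> CN N. xmap n v \<in> V (i - 1)}"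
  shows "V \<in> Yfib n s"
proof -
  have NN: "2 * (n - 1) \<le> N" "1 \<le> n" using N n2 s by auto
  have "\<forall>j\<le>n. xmap n ` V j \<subseteq> V j"
  proof (intro allI impI)
    fix j assume j: "j \<le> n"
    show "xmap n ` V j \<subseteq> V j"
    proof (cases "j \<le> i - 1")
      case True
      have "i - 1 \<le> n" using i by simp
      then have "V j \<subseteq> supp (n - 1)" using Fl_mono[OF V(1) True] V(2) by auto
      then show ?thesis using xmap_kill Fl_props(1)[OF V(1) j] cvs.subspace_0 by fastforce
    next
      case False
      have "V j \<subseteq> V n" using Fl_mono[OF V(1) j] by simp
      moreover have "V (i - 1) \<subseteq> V j" using Fl_mono[OF V(1), of "i - 1" j] False j by simp
      ultimately show ?thesis using V(4) by auto
    qed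
  qed
  then show ?thesis using V I_eq[OF NN(2,1)] N unfolding Yfib_def by auto
qed

lemma criterion:
  assumes N: "N = n + s - 1" and n2: "2 \<le> n" and s: "n - 1 \<le> s" and i: "1 \<le> i" "i \<le> n"
    and U: "\<forall>l\<in>{1..n}. U l \<in> CN N" "indep {1..n} U"
    and lo: "\<And>j. j < i \<Longrightarrow> flag_of n U j \<subseteq> supp (n - 1) \<and> flag_of n U j \<inter> supp (n - 1 - j) \<subseteq> {0}"
    and hi: "\<And>j. i \<le> j \<Longrightarrow> j \<le> n \<Longrightarrow> flag_of n U j \<inter> supp (N - 1) \<subseteq> supp (n - 1)
        \<and> cvs.dim (flag_of n U j \<inter> supp (N - 1)) = j - 1
        \<and> flag_of n U j \<inter> supp (n - j) \<subseteq> {0}"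
    and Y: "supp (n - 1) \<subseteq> flag_of n U n" "\<And>j. j \<le> n \<Longrightarrow> xmap n ` flag_of n U j \<subseteq> flag_of n U j"
  shows "flag_of n U \<in> schubert_cell N n (wi N n i) \<inter> Yfib n s"
proof -
  let ?q = "n - 1"
  let ?F = "flag_of n U"
  have NN: "2 * (n - 1) \<le> N" "n \<le> N" "?q < N" "1 \<le> n" using N n2 s by auto
  have FFl: "?F \<in> Fl N n" by (rule flag_of_Fl[OF U])
  have cntf: "cnt N n i j m = (if j < i then min j (j + m - ?q) else if N \<le> m then j
      else min (j - 1) (j - 1 + m - ?q))" if "j \<le> n" for j m
    using cnt_formula[OF i NN(2) that] .
  have sch: "cvs.dim (?F j \<inter> supp m) = cnt N n i j m" if j: "j \<le> n" and m: "m \<le> N" for j m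
  proof (cases "j < i")
    case True
    have "cvs.dim (?F j \<inter> supp m) = min j (j + m - ?q)"
      by (rule transversal_dim) (use Fl_props[OF FFl j] lo[OF True] True i in auto)
    then show ?thesis using cntf[OF j] True by simp
  next
    case False
    show ?thesis
    proof (cases "N \<le> m")
      case True
      have "?F j \<subseteq> supp m" using Fl_props(2)[OF FFl j] supp_mono[OF True] by (auto simp: CN_eq)
      then have "?F j \<inter> supp m = ?F j" by auto
      then show ?thesis using cntf[OF j] True False Fl_props(3)[OF FFl j] by simp
    next
      case False2: False
      have h: "?F j \<inter> supp (N - 1) \<subseteq> supp ?q" "cvs.dim (?F j \<inter> supp (N - 1)) = j - 1"
        "?F j \<inter> supp (n - j) \<subseteq> {0}" using hi[of j] False j by auto
      have eq: "?F j \<inter> supp m = (?F j \<inter> supp (N - 1)) \<inter> supp m"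
      proof -
        have "m \<le> N - 1" using False2 by simp
        then show ?thesis using supp_mono[of m "N - 1"] by auto
      qed
      have "cvs.dim ((?F j \<inter> supp (N - 1)) \<inter> supp m) = min (j - 1) (j - 1 + m - ?q)"
      proof (rule transversal_dim)
        show "cvs.subspace (?F j \<inter> supp (N - 1))"
          using Fl_props(1)[OF FFl j] subspace_supp by (rule cvs.subspace_inter)
        have "n - 1 - (j - 1) = n - j" using False i by simp
        then show "?F j \<inter> supp (N - 1) \<inter> supp (n - 1 - (j - 1)) \<subseteq> {0}" using h(3) by auto
      qed (use h j in auto)
      then show ?thesis using eq cntf[OF j] False False2 by simp
    qed
  qed
  have "?F \<in> schubert_cell N n (wi N n i)"
    unfolding schubert_cell_def Espan_eq using FFl sch by (simp add: cnt_def)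
  moreover have "?F \<in> Yfib n s"
    unfolding Yfib_def using FFl Y I_eq[OF NN(4,1)] N by auto
  ultimately show ?thesis by simp
qed


lemma lc_in_subspace: assumes "cvs.subspace T" "\<forall>l\<in>S. f l \<in> T" shows "lc S c f \<in> T"
  unfolding sum_cscale_lc[symmetric] using assms
  by (intro cvs.subspace_sum) (auto intro: cvs.subspace_scale)

lemma lc_empty: "lc {} c f = 0" by (simp add: lc_def fun_eq_iff)

lemma lc_insert: "finite S \<Longrightarrow> l0 \<notin> S \<Longrightarrow> lc (insert l0 S) c f m = c l0 * f l0 m + lc S c f m"
  by (simp add: lc_def)

lemma pivot_sum: "(\<Sum>l\<in>S. c l * (A l - B l / d * X)) = (\<Sum>l\<in>S. c l * A l) - (\<Sum>l\<in>S. c l * B l) / d * (X::complex)"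
proof -
  have e1: "(\<Sum>l\<in>S. c l * B l) / d * X = (\<Sum>l\<in>S. c l * B l) * (X / d)" by simp
  also have "\<dots> = (\<Sum>l\<in>S. c l * B l * (X / d))" by (rule sum_distrib_right)
  finally have e1': "(\<Sum>l\<in>S. c l * B l) / d * X = (\<Sum>l\<in>S. c l * B l * (X / d))" .
  have "(\<Sum>l\<in>S. c l * (A l - B l / d * X)) = (\<Sum>l\<in>S. c l * A l - c l * B l * (X / d))"
    by (rule sum.cong) (auto simp: algebra_simps)
  also have "\<dots> = (\<Sum>l\<in>S. c l * A l) - (\<Sum>l\<in>S. c l * B l * (X / d))"
    by (rule sum_subtractf)
  finally show ?thesis using e1' by simp
qed

lemma limit_lc:
  fixes U :: "nat \<Rightarrow> 'a \<Rightarrow> cvec" and u :: "'a \<Rightarrow> cvec"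
  assumes "finite S" "\<forall>l\<in>S. \<forall>m. (\<lambda>k. U k l m) \<longlonglongrightarrow> u l m" "\<forall>m. (\<lambda>k. b k m) \<longlonglongrightarrow> b0 m"
    "eventually (\<lambda>k. \<exists>c. b k = lc S c (U k)) sequentially" "indep S u"
  shows "\<exists>c. b0 = lc S c u"
  using assms
proof (induct S arbitrary: U u b b0 rule: finite_induct)
  case empty
  have "b0 = 0"
  proof
    fix m
    have "eventually (\<lambda>k. b k m = 0) sequentially"
      using empty(3) by eventually_elim (auto simp: lc_empty)
    then have "(\<lambda>k. b k m) \<longlonglongrightarrow> 0" by (rule tendsto_eventually)
    then show "b0 m = 0 m" using empty(2) LIMSEQ_unique by fastforce
  qed
  then show ?case by (auto simp: lc_empty)
next
  case (insert l0 S)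
  have "u l0 \<noteq> 0"
  proof
    assume z: "u l0 = 0"
    let ?c = "\<lambda>l. if l = l0 then (1::complex) else 0"
    have "lc (insert l0 S) ?c u = 0"
    proof
      fix m
      have "lc S ?c u m = 0" using insert(2) by (auto simp: lc_def intro!: sum.neutral)
      then show "lc (insert l0 S) ?c u m = 0 m" using lc_insert[OF insert(1,2)] z by simp
    qed
    then show False using insert(7) unfolding indep_def by force
  qed
  then obtain m0 where m0: "u l0 m0 \<noteq> 0" by (auto simp: fun_eq_iff)
  have lim0: "(\<lambda>k. U k l0 m0) \<longlonglongrightarrow> u l0 m0" using insert(4) by simp
  have ev0: "eventually (\<lambda>k. U k l0 m0 \<noteq> 0) sequentially"
    using tendsto_imp_eventually_ne[OF lim0 m0] .
  define U' where "U' k l = U k l - cscale (U k l m0 / U k l0 m0) (U k l0)" for k l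
  define u' where "u' l = u l - cscale (u l m0 / u l0 m0) (u l0)" for l
  define b' where "b' k = b k - cscale (b k m0 / U k l0 m0) (U k l0)" for k
  define b0' where "b0' = b0 - cscale (b0 m0 / u l0 m0) (u l0)"
  have conv: "\<forall>l\<in>S. \<forall>m. (\<lambda>k. U' k l m) \<longlonglongrightarrow> u' l m"
  proof (intro ballI allI)
    fix l m assume l: "l \<in> S"
    have "(\<lambda>k. U k l m - U k l m0 / U k l0 m0 * U k l0 m) \<longlonglongrightarrow> u l m - u l m0 / u l0 m0 * u l0 m"
      using insert(4) l m0 by (intro tendsto_intros) auto
    then show "(\<lambda>k. U' k l m) \<longlonglongrightarrow> u' l m" by (simp add: U'_def u'_def cscale_def)
  qed
  have convb: "\<forall>m. (\<lambda>k. b' k m) \<longlonglongrightarrow> b0' m"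
  proof
    fix m
    have "(\<lambda>k. b k m - b k m0 / U k l0 m0 * U k l0 m) \<longlonglongrightarrow> b0 m - b0 m0 / u l0 m0 * u l0 m"
      using insert(4,5) m0 by (intro tendsto_intros) auto
    then show "(\<lambda>k. b' k m) \<longlonglongrightarrow> b0' m" by (simp add: b'_def b0'_def cscale_def)
  qed
  have evb: "eventually (\<lambda>k. \<exists>c. b' k = lc S c (U' k)) sequentially"
    using insert(6) ev0
  proof eventually_elim
    case (elim k)
    then obtain c where c: "b k = lc (insert l0 S) c (U k)" by auto
    let ?d = "U k l0 m0"
    have "b' k = lc S c (U' k)"
    proof
      fix m
      have bm: "b k m = c l0 * U k l0 m + (\<Sum>l\<in>S. c l * U k l m)" for m
        using c lc_insert[OF insert(1,2)] by (simp add: lc_def)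
      have "b' k m = b k m - b k m0 / ?d * U k l0 m" by (simp add: b'_def cscale_def)
      also have "\<dots> = (\<Sum>l\<in>S. c l * U k l m) - (\<Sum>l\<in>S. c l * U k l m0) / ?d * U k l0 m"
        unfolding bm using elim(2) by (simp add: field_simps)
      also have "\<dots> = (\<Sum>l\<in>S. c l * (U k l m - U k l m0 / ?d * U k l0 m))"
        by (rule pivot_sum[symmetric])
      also have "\<dots> = lc S c (U' k) m" by (simp add: lc_def U'_def cscale_def)
      finally show "b' k m = lc S c (U' k) m" .
    qed
    then show ?case by blast
  qed
  have ind: "indep S u'"
    unfolding indep_def
  proof (intro allI impI ballI)
    fix c l assume c: "lc S c u' = 0" and l: "l \<in> S"
    define c' where "c' = (\<lambda>k. if k = l0 then - (\<Sum>l\<in>S. c l * u l m0) / u l0 m0 else c k)"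
    have "lc (insert l0 S) c' u = 0"
    proof
      fix m
      have "lc S c' u = lc S c u" using insert(2) by (auto simp: lc_def c'_def intro!: sum.cong ext)
      have "0 = lc S c u' m" using c by simp
      also have "\<dots> = (\<Sum>l\<in>S. c l * u l m) - (\<Sum>l\<in>S. c l * u l m0) / u l0 m0 * u l0 m"
        unfolding pivot_sum[symmetric] by (simp add: lc_def u'_def cscale_def)
      also have "\<dots> = c' l0 * u l0 m + lc S c u m" by (simp add: c'_def lc_def algebra_simps)
      also have "\<dots> = lc (insert l0 S) c' u m"
        using lc_insert[OF insert(1,2), of c' u m] \<open>lc S c' u = lc S c u\<close> by simp
      finally show "lc (insert l0 S) c' u m = 0 m" by simp
    qed
    then have "c' l = 0" using insert(7) l unfolding indep_def by blast
    then show "c l = 0" using l insert(2) by (auto simp: c'_def split: if_splits)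
  qed
  obtain c where c: "b0' = lc S c u'" using insert(3)[OF conv convb evb ind] by blast
  define c' where "c' = (\<lambda>k. if k = l0 then b0 m0 / u l0 m0 - (\<Sum>l\<in>S. c l * u l m0) / u l0 m0 else c k)"
  have "b0 = lc (insert l0 S) c' u"
  proof
    fix m
    have "lc S c' u = lc S c u" using insert(2) by (auto simp: lc_def c'_def intro!: sum.cong ext)
    have "b0 m = b0' m + b0 m0 / u l0 m0 * u l0 m" by (simp add: b0'_def cscale_def)
    also have "\<dots> = (\<Sum>l\<in>S. c l * u l m) - (\<Sum>l\<in>S. c l * u l m0) / u l0 m0 * u l0 m + b0 m0 / u l0 m0 * u l0 m"
      using c unfolding pivot_sum[symmetric] by (simp add: lc_def u'_def cscale_def)
    also have "\<dots> = c' l0 * u l0 m + lc S c u m" by (simp add: c'_def lc_def algebra_simps)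
    also have "\<dots> = lc (insert l0 S) c' u m"
      using lc_insert[OF insert(1,2), of c' u m] \<open>lc S c' u = lc S c u\<close> by simp
    finally show "b0 m = lc (insert l0 S) c' u m" .
  qed
  then show ?case by blast
qed

lemma Z_closed:
  assumes n1: "1 \<le> i" "i \<le> n"
    and u: "flag_of n u \<in> Fl N n"
    and UF: "\<And>k. flag_of n (U k) \<in> Fl N n"
    and UZ: "\<And>k. flag_of n (U k) (i - 1) \<subseteq> supp (n - 1) \<and> supp (n - 1) \<subseteq> flag_of n (U k) n \<and>
       flag_of n (U k) n \<subseteq> {v \<in> CN N. xmap n v \<in> flag_of n (U k) (i - 1)}"
    and lim: "\<forall>j m. (\<lambda>k. U k j m) \<longlonglongrightarrow> u j m"
  shows "flag_of n u (i - 1) \<subseteq> supp (n - 1)" "supp (n - 1) \<subseteq> flag_of n u n"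
    "flag_of n u n \<subseteq> {v \<in> CN N. xmap n v \<in> flag_of n u (i - 1)}"
proof -
  let ?q = "n - 1"
  have i1n: "i - 1 \<le> n" using n1 by simp
  have "\<forall>l\<in>{1..i - 1}. u l \<in> supp ?q"
  proof
    fix l assume l: "l \<in> {1..i - 1}"
    have Ukl: "U k l \<in> supp ?q" for k
    proof -
      have "U k l \<in> flag_of n (U k) (i - 1)" unfolding flag_of_le[OF i1n] using l by (intro cvs.span_base) auto
      then show ?thesis using UZ[of k] by blast
    qed
    show "u l \<in> supp ?q" unfolding supp_def mem_Collect_eq
    proof (intro allI impI)
      fix m assume m: "m < 1 \<or> ?q < m"
      have "(\<lambda>k. U k l m) = (\<lambda>k. 0)" using Ukl m unfolding supp_def by auto
      then have "(\<lambda>k. U k l m) \<longlonglongrightarrow> 0" by simp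
      then show "u l m = 0" using lim LIMSEQ_unique by blast
    qed
  qed
  then show "flag_of n u (i - 1) \<subseteq> supp ?q" unfolding flag_of_le[OF i1n]
    using cvs.span_minimal[OF _ subspace_supp] by blast
  have indn: "indep {1..n} u" and indi: "indep {1..i - 1} u"
    using Fl_flag_of(1)[OF u] i1n by auto
  show "supp ?q \<subseteq> flag_of n u n"
  proof
    fix b assume b: "b \<in> supp ?q"
    have "\<exists>c. b = lc {1..n} c u"
    proof (rule limit_lc[where U = U and b = "\<lambda>k. b"])
      have "b \<in> cvs.span (U k ` {1..n})" for k using UZ[of k] b by (auto simp: flag_of_le)
      then have "\<exists>c. b = lc {1..n} c (U k)" for k using in_span_image_iff[of "{1..n}"] by blast
      then show "\<forall>\<^sub>F k in sequentially. \<exists>c. b = lc {1..n} c (U k)" by (intro always_eventually) blast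
    qed (use lim indn in auto)
    then show "b \<in> flag_of n u n" using in_span_image_iff[of "{1..n}"] by (auto simp: flag_of_le)
  qed
  have xu: "xmap n (u l) \<in> flag_of n u (i - 1)" if l: "l \<in> {1..n}" for l
  proof -
    have "\<exists>c. xmap n (u l) = lc {1..i - 1} c u"
    proof (rule limit_lc[where U = U and b = "\<lambda>k. xmap n (U k l)"])
      show "\<forall>m. (\<lambda>k. xmap n (U k l) m) \<longlonglongrightarrow> xmap n (u l) m"
      proof
        fix m show "(\<lambda>k. xmap n (U k l) m) \<longlonglongrightarrow> xmap n (u l) m"
        proof (cases "1 \<le> m \<and> m \<le> n - 1")
          case True
          then have "(\<lambda>k. xmap n (U k l) m) = (\<lambda>k. U k l (m + (n - 1)))" "xmap n (u l) m = u l (m + (n - 1))"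
            by (simp_all only: xmap_apply if_True simp_thms)
          then show ?thesis using lim by simp
        next
          case False
          then have "(\<lambda>k. xmap n (U k l) m) = (\<lambda>k. 0)" "xmap n (u l) m = 0"
            by (simp_all only: xmap_apply if_False simp_thms)
          then show ?thesis by simp
        qed
      qed
      have "U k l \<in> flag_of n (U k) n" for k
        using l cvs.span_base[of "U k l" "U k ` {1..n}"] by (auto simp: flag_of_le)
      then have "xmap n (U k l) \<in> flag_of n (U k) (i - 1)" for k using UZ by blast
      then have "\<exists>c. xmap n (U k l) = lc {1..i - 1} c (U k)" for k
        using in_span_image_iff[of "{1..i - 1}"] unfolding flag_of_le[OF i1n] by blast
      then show "\<forall>\<^sub>F k in sequentially. \<exists>c. xmap n (U k l) = lc {1..i - 1} c (U k)"
        by (intro always_eventually) blast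
    qed (use lim indi in auto)
    then show ?thesis using in_span_image_iff[of "{1..i - 1}"] unfolding flag_of_le[OF i1n] by blast
  qed
  show "flag_of n u n \<subseteq> {v \<in> CN N. xmap n v \<in> flag_of n u (i - 1)}"
  proof
    fix y assume y: "y \<in> flag_of n u n"
    have "y \<in> CN N" using y Fl_props(2)[OF u, of n] by auto
    obtain c where c: "y = lc {1..n} c u" using y in_span_image_iff[of "{1..n}"] by (auto simp: flag_of_le)
    have "xmap n y = lc {1..n} c (\<lambda>l. xmap n (u l))" unfolding c by (rule xmap_lc)
    also have "\<dots> \<in> flag_of n u (i - 1)"
      by (rule lc_in_subspace) (use xu Fl_props(1)[OF u i1n] in auto)
    finally show "y \<in> {v \<in> CN N. xmap n v \<in> flag_of n u (i - 1)}" using \<open>y \<in> CN N\<close> by simp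
  qed
qed


lemma lc_zero_coeff: "(\<forall>l\<in>S. c l = 0) \<Longrightarrow> lc S c f = 0"
  by (auto simp: lc_def fun_eq_iff intro!: sum.neutral)

lemma eigen_finite:
  fixes J :: "nat set" and M :: "nat \<Rightarrow> nat \<Rightarrow> complex"
  assumes J: "finite J"
  shows "finite {t. \<exists>d. (\<exists>m\<in>J. d m \<noteq> 0) \<and> (\<forall>m\<in>J. (\<Sum>m'\<in>J. M m m' * d m') + t * d m = 0)}"
    (is "finite ?T")
proof (rule ccontr)
  assume inf: "infinite ?T"
  define d where "d t = (SOME d. (\<exists>m\<in>J. d m \<noteq> 0) \<and> (\<forall>m\<in>J. (\<Sum>m'\<in>J. M m m' * d m') + t * d m = 0))" for t
  have dprop: "(\<exists>m\<in>J. d t m \<noteq> 0) \<and> (\<forall>m\<in>J. (\<Sum>m'\<in>J. M m m' * d t m') + t * d t m = 0)" if "t \<in> ?T" for t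
  proof -
    have "\<exists>d. (\<exists>m\<in>J. d m \<noteq> 0) \<and> (\<forall>m\<in>J. (\<Sum>m'\<in>J. M m m' * d m') + t * d m = 0)" using that by simp
    then show ?thesis unfolding d_def by (rule someI_ex)
  qed
  define v where "v t = (\<lambda>m. if m \<in> J then d t m else 0)" for t
  have veig: "(\<Sum>m'\<in>J. M m m' * v t m') = - t * v t m" if "t \<in> ?T" "m \<in> J" for t m
  proof -
    have "(\<Sum>m'\<in>J. M m m' * v t m') = (\<Sum>m'\<in>J. M m m' * d t m')" by (rule sum.cong) (auto simp: v_def)
    then show ?thesis using dprop[OF that(1)] that(2) by (auto simp: v_def add_eq_0_iff)
  qed
  have vnz: "v t \<noteq> 0" if "t \<in> ?T" for t
    using dprop[OF that] by (auto simp: v_def fun_eq_iff)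
  have vJ: "v t m = 0" if "m \<notin> J" for t m using that by (simp add: v_def)
  have ind: "finite K \<Longrightarrow> K \<subseteq> ?T \<Longrightarrow> indep K v" for K
  proof (induct K rule: finite_induct)
    case empty then show ?case by (simp add: indep_def)
  next
    case (insert t0 K)
    show ?case unfolding indep_def
    proof (intro allI impI)
      fix c assume c: "lc (insert t0 K) c v = 0"
      have "lc K (\<lambda>s. c s * (t0 - s)) v = 0"
      proof
        fix m
        show "lc K (\<lambda>s. c s * (t0 - s)) v m = 0 m"
        proof (cases "m \<in> J")
          case False then show ?thesis by (simp add: lc_def vJ)
        next
          case True
          have "0 = (\<Sum>m'\<in>J. M m m' * lc (insert t0 K) c v m') + t0 * lc (insert t0 K) c v m"
            using c by simp
          also have "\<dots> = (\<Sum>s\<in>insert t0 K. c s * ((\<Sum>m'\<in>J. M m m' * v s m') + t0 * v s m))"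
            by (simp add: lc_def sum_distrib_left sum_distrib_right sum.distrib algebra_simps sum.swap[of _ J])
          also have "\<dots> = (\<Sum>s\<in>insert t0 K. c s * ((t0 - s) * v s m))"
          proof (rule sum.cong)
            fix s assume "s \<in> insert t0 K"
            then have "s \<in> ?T" using insert(4) by blast
            then have "(\<Sum>m'\<in>J. M m m' * v s m') = - s * v s m" using veig True by blast
            then show "c s * ((\<Sum>m'\<in>J. M m m' * v s m') + t0 * v s m) = c s * ((t0 - s) * v s m)"
              by (simp add: algebra_simps)
          qed simp
          also have "\<dots> = (\<Sum>s\<in>K. c s * ((t0 - s) * v s m))"
            using insert(1,2) by simp
          also have "\<dots> = lc K (\<lambda>s. c s * (t0 - s)) v m" by (simp add: lc_def algebra_simps)
          finally show ?thesis by simp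
        qed
      qed
      then have "\<forall>s\<in>K. c s * (t0 - s) = 0" using insert(3) insert(4) unfolding indep_def by blast
      then have cK: "\<forall>s\<in>K. c s = 0" using insert(2) by auto
      then have "lc K c v = 0" by (rule lc_zero_coeff)
      then have "cscale (c t0) (v t0) = 0"
        using c lc_insert[OF insert(1,2), of c v] by (auto simp: fun_eq_iff cscale_def)
      then have "c t0 = 0" using vnz insert(4) by auto
      then show "\<forall>l\<in>insert t0 K. c l = 0" using cK by auto
    qed
  qed
  obtain K where K: "K \<subseteq> ?T" "finite K" "card K = Suc (card J)"
    using infinite_arbitrarily_large[OF inf] by blast
  have "cvs.dim (cvs.span (v ` K)) = card K" using indep_dim[OF K(2) ind[OF K(2,1)]] .
  moreover have "cvs.span (v ` K) \<subseteq> cvs.span (e ` J)"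
  proof (rule cvs.span_mono[THEN order_trans[OF _ eq_refl], OF _ cvs.span_span])
    show "v ` K \<subseteq> cvs.span (e ` J)"
    proof
      fix w assume "w \<in> v ` K"
      then obtain t where w: "w = v t" by auto
      have "w = lc J w e"
      proof
        fix m show "w m = lc J w e m"
        proof (cases "m \<in> J")
          case True
          have "(\<Sum>l\<in>J. w l * e l m) = (\<Sum>l\<in>J. if l = m then w m else 0)"
            by (rule sum.cong) (auto simp: e_def)
          then show ?thesis using True J by (simp add: lc_def)
        next
          case False
          then show ?thesis using w vJ by (auto simp: lc_def e_def intro!: sum.neutral)
        qed
      qed
      then show "w \<in> cvs.span (e ` J)" using lc_in_span[OF J, of w e] by simp
    qed
  qed
  then have "cvs.dim (cvs.span (v ` K)) \<le> card (e ` J)" using J by (intro cvs.dim_le_card) auto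
  moreover have "card (e ` J) \<le> card J" using J card_image_le by blast
  ultimately show False using K(3) by simp
qed

lemma transv_finite:
  fixes S :: "nat set" and \<sigma> :: "nat \<Rightarrow> nat" and a :: "nat \<Rightarrow> cvec"
  assumes S: "finite S" and inj: "inj_on \<sigma> S" and im: "\<sigma> ` S = {k + 1..q}"
  shows "finite {t. \<not> (\<forall>c. lc S c (\<lambda>l. a l + cscale t (e (\<sigma> l))) \<in> supp k \<longrightarrow> (\<forall>l\<in>S. c l = 0))}"
proof -
  let ?J = "{k + 1..q}"
  define \<tau> where "\<tau> = the_inv_into S \<sigma>"
  have \<tau>\<sigma>: "\<tau> (\<sigma> l) = l" if "l \<in> S" for l using the_inv_into_f_f[OF inj that] by (simp add: \<tau>_def)
  have \<sigma>\<tau>: "\<sigma> (\<tau> m) = m" "\<tau> m \<in> S" if "m \<in> ?J" for m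
    using f_the_inv_into_f[OF inj, of m] the_inv_into_into[OF inj, of m S] that im by (auto simp: \<tau>_def)
  define M where "M m m' = a (\<tau> m') m" for m m'
  let ?T = "{t. \<exists>d. (\<exists>m\<in>?J. d m \<noteq> 0) \<and> (\<forall>m\<in>?J. (\<Sum>m'\<in>?J. M m m' * d m') + t * d m = 0)}"
  have "{t. \<not> (\<forall>c. lc S c (\<lambda>l. a l + cscale t (e (\<sigma> l))) \<in> supp k \<longrightarrow> (\<forall>l\<in>S. c l = 0))} \<subseteq> ?T"
  proof
    fix t assume "t \<in> {t. \<not> (\<forall>c. lc S c (\<lambda>l. a l + cscale t (e (\<sigma> l))) \<in> supp k \<longrightarrow> (\<forall>l\<in>S. c l = 0))}"
    then obtain c l0 where c: "lc S c (\<lambda>l. a l + cscale t (e (\<sigma> l))) \<in> supp k" and l0: "l0 \<in> S" "c l0 \<noteq> 0" by auto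
    define d where "d m = c (\<tau> m)" for m
    have "(\<exists>m\<in>?J. d m \<noteq> 0)" using l0 \<tau>\<sigma> im by (auto simp: d_def intro!: bexI[of _ "\<sigma> l0"])
    moreover have "\<forall>m\<in>?J. (\<Sum>m'\<in>?J. M m m' * d m') + t * d m = 0"
    proof
      fix m assume m: "m \<in> ?J"
      have "lc S c (\<lambda>l. a l + cscale t (e (\<sigma> l))) m = 0" using c m by (auto simp: supp_def)
      moreover have "lc S c (\<lambda>l. a l + cscale t (e (\<sigma> l))) m = (\<Sum>l\<in>S. c l * a l m) + (\<Sum>l\<in>S. c l * t * e (\<sigma> l) m)"
        by (simp add: lc_def cscale_def sum.distrib algebra_simps)
      moreover have "(\<Sum>l\<in>S. c l * t * e (\<sigma> l) m) = t * d m"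
      proof -
        have "(\<Sum>l\<in>S. c l * t * e (\<sigma> l) m) = (\<Sum>l\<in>S. if l = \<tau> m then c l * t else 0)"
        proof (rule sum.cong)
          fix l assume l: "l \<in> S"
          have "\<sigma> l = m \<longleftrightarrow> l = \<tau> m" using \<tau>\<sigma>[OF l] \<sigma>\<tau>[OF m] by auto
          then show "c l * t * e (\<sigma> l) m = (if l = \<tau> m then c l * t else 0)" by (auto simp: e_def)
        qed simp
        also have "\<dots> = c (\<tau> m) * t" using S \<sigma>\<tau>(2)[OF m] by simp
        finally show ?thesis by (simp add: d_def)
      qed
      moreover have "(\<Sum>l\<in>S. c l * a l m) = (\<Sum>m'\<in>?J. M m m' * d m')"
      proof -
        have "(\<Sum>m'\<in>?J. M m m' * d m') = (\<Sum>m'\<in>\<sigma> ` S. M m m' * d m')" using im by simp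
        also have "\<dots> = (\<Sum>l\<in>S. M m (\<sigma> l) * d (\<sigma> l))" by (rule sum.reindex[OF inj, unfolded comp_def])
        also have "\<dots> = (\<Sum>l\<in>S. c l * a l m)" by (rule sum.cong) (auto simp: M_def d_def \<tau>\<sigma>)
        finally show ?thesis by simp
      qed
      ultimately show "(\<Sum>m'\<in>?J. M m m' * d m') + t * d m = 0" by simp
    qed
    ultimately show "t \<in> ?T" by blast
  qed
  moreover have "finite ?T" by (rule eigen_finite) simp
  ultimately show ?thesis by (rule finite_subset)
qed


lemma dim0_zero: assumes "FD V" "cvs.subspace V" "cvs.dim V = 0" shows "V = {0}"
proof -
  obtain B where B: "finite B" "B \<subseteq> V" "cvs.independent B" "V \<subseteq> cvs.span B" "card B = cvs.dim V"
    using FD_basis[OF assms(1)] by blast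
  then have "B = {}" using assms(3) by simp
  then have "V \<subseteq> {0}" using B(4) by (simp add: cvs.span_empty)
  then show ?thesis using cvs.subspace_0[OF assms(2)] by auto
qed

lemma dim_insert_ge:
  assumes "finite B0" "a \<notin> cvs.span B0"
  shows "cvs.dim (cvs.span B0) + 1 \<le> cvs.dim (cvs.span (insert a B0))"
proof -
  have FD0: "FD (cvs.span B0)" using assms(1) by (auto simp: FD_def)
  obtain C where C: "finite C" "C \<subseteq> cvs.span B0" "cvs.independent C" "cvs.span B0 \<subseteq> cvs.span C"
      "card C = cvs.dim (cvs.span B0)"
    using FD_basis[OF FD0] by blast
  have "cvs.span C \<subseteq> cvs.span B0" using C(2) by (simp add: cvs.span_minimal cvs.subspace_span)
  then have aC: "a \<notin> cvs.span C" using assms(2) C(4) by auto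
  then have ind: "cvs.independent (insert a C)" using C(3) by (rule cvs.independent_insertI)
  have aC': "a \<notin> C" using aC cvs.span_base by blast
  have sub: "insert a C \<subseteq> cvs.span (insert a B0)"
    using C(2) cvs.span_mono[of B0 "insert a B0"] cvs.span_base[of a "insert a B0"] by auto
  have FD1: "FD (cvs.span (insert a B0))" using assms(1) by (auto simp: FD_def)
  have "cvs.dim (insert a C) \<le> cvs.dim (cvs.span (insert a B0))" by (rule dim_mono[OF FD1 sub])
  moreover have "cvs.dim (insert a C) = card C + 1"
    using cvs.dim_eq_card_independent[OF ind] aC' C(1) by simp
  ultimately show ?thesis using C(5) by simp
qed

lemma frame_flag:
  assumes V: "V \<in> Fl N n" and u: "\<forall>j\<in>{1..n}. u j \<in> V j \<and> u j \<notin> V (j - 1)"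
  shows "flag_of n u = V"
proof
  fix j
  show "flag_of n u j = V j"
  proof (cases "j \<le> n")
    case False
    then show ?thesis using V by (simp add: flag_of_def Fl_def)
  next
    case True
    then show ?thesis
    proof (induct j)
      case 0
      have "V 0 = {0}" using Fl_props[OF V, of 0] by (intro dim0_zero) auto
      then show ?case by (simp add: flag_of_def cvs.span_empty)
    next
      case (Suc j)
      have IH: "cvs.span (u ` {1..j}) = V j" using Suc by (simp add: flag_of_le)
      have ins: "u ` {1..Suc j} = insert (u (Suc j)) (u ` {1..j})"
        by (auto simp: le_Suc_eq intro!: imageI[of "Suc j"])
      have "Suc j \<in> {1..n}" using Suc(2) by simp
      then have "u (Suc j) \<in> V (Suc j) \<and> u (Suc j) \<notin> V (Suc j - 1)" using u by blast
      then have uj: "u (Suc j) \<in> V (Suc j)" "u (Suc j) \<notin> V j" by auto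
      have A: "cvs.span (u ` {1..Suc j}) \<subseteq> V (Suc j)"
      proof (rule cvs.span_minimal)
        show "u ` {1..Suc j} \<subseteq> V (Suc j)"
          using uj(1) IH cvs.span_base[of _ "u ` {1..j}"] Fl_mono[OF V, of j "Suc j"] Suc(2) unfolding ins by auto
      qed (use Fl_props[OF V Suc(2)] in auto)
      have "cvs.dim (cvs.span (u ` {1..j})) + 1 \<le> cvs.dim (cvs.span (u ` {1..Suc j}))"
        unfolding ins by (rule dim_insert_ge) (use uj IH in auto)
      moreover have "cvs.dim (cvs.span (u ` {1..j})) = j" using IH Fl_props(3)[OF V, of j] Suc(2) by simp
      ultimately have "Suc j \<le> cvs.dim (cvs.span (u ` {1..Suc j}))" by linarith
      then have "cvs.span (u ` {1..Suc j}) = V (Suc j)"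
        by (intro dim_eq_subset A cvs.subspace_span) (use Fl_props[OF V Suc(2)] in auto)
      then show ?case using Suc(2) by (simp add: flag_of_le)
    qed
  qed
qed

lemma Z_frame:
  assumes n2: "2 \<le> n" and NN: "n \<le> N" and i: "1 \<le> i" "i \<le> n"
    and V: "V \<in> Fl N n" "V (i - 1) \<subseteq> supp (n - 1)" "supp (n - 1) \<subseteq> V n"
  obtains u p where "flag_of n u = V" "i \<le> p" "p \<le> n"
    "\<forall>l\<in>{1..n} - {p}. u l \<in> supp (n - 1)" "u p \<notin> supp (n - 1)"
proof -
  let ?q = "n - 1"
  have Vn: "\<not> V n \<subseteq> supp ?q"
    proof
      assume "V n \<subseteq> supp ?q"
      then have "cvs.dim (V n) \<le> cvs.dim (supp ?q)" using dim_mono[OF FD_supp] by blast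
      then show False using Fl_props(3)[OF V(1), of n] dim_Espan[of ?q] n2 by (simp add: Espan_eq)
    qed
  then have ex: "\<exists>j. \<not> V j \<subseteq> supp ?q" by blast
  define p where "p = (LEAST j. \<not> V j \<subseteq> supp ?q)"
  have p1: "\<not> V p \<subseteq> supp ?q" unfolding p_def using LeastI_ex[OF ex] .
  have p2: "V j \<subseteq> supp ?q" if "j < p" for j using not_less_Least[OF that[unfolded p_def]] by simp
  have pn: "p \<le> n"
  proof (rule ccontr)
    assume "\<not> p \<le> n" then have "V n \<subseteq> supp ?q" using p2 by simp
    then show False using Vn by simp
  qed
  have ip: "i \<le> p"
  proof (rule ccontr)
    assume "\<not> i \<le> p"
    then have "V p \<subseteq> V (i - 1)" using Fl_mono[OF V(1), of p "i - 1"] i by simp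
    then show False using p1 V(2) by blast
  qed
  have gen: "\<exists>y. y \<in> V j \<and> y \<notin> V (j - 1)" if j: "j \<in> {1..n}" for j
  proof (rule ccontr)
    assume "\<not> ?thesis" then have "V j \<subseteq> V (j - 1)" by blast
    then have "cvs.dim (V j) \<le> cvs.dim (V (j - 1))" using dim_mono Fl_props(4)[OF V(1), of "j - 1"] j by auto
    then show False using Fl_props(3)[OF V(1), of j] Fl_props(3)[OF V(1), of "j - 1"] j by auto
  qed
  obtain up where up: "up \<in> V p" "up \<notin> supp ?q" using p1 by blast
  have upn: "up \<in> V n" using up(1) Fl_mono[OF V(1) pn] by auto
  have spanq: "cvs.span (e ` {1..?q}) = supp ?q" using Espan_eq[of ?q] by (simp add: Espan_def)
  let ?D = "cvs.span (insert up (e ` {1..?q}))"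
  have DV: "?D = V n"
  proof (rule dim_eq_subset)
    show "FD (V n)" using Fl_props(4)[OF V(1)] by simp
    have "e ` {1..?q} \<subseteq> supp ?q" by (auto simp: supp_def e_def)
    then have "insert up (e ` {1..?q}) \<subseteq> V n" using upn V(3) by auto
    then show "?D \<subseteq> V n"
      using Fl_props(1)[OF V(1), of n] by (intro cvs.span_minimal) auto
    show "cvs.subspace ?D" by (rule cvs.subspace_span)
    have "cvs.dim (cvs.span (e ` {1..?q})) + 1 \<le> cvs.dim ?D"
      by (rule dim_insert_ge) (use up(2) spanq in auto)
    then show "cvs.dim (V n) \<le> cvs.dim ?D"
      using dim_Espan[of ?q] Fl_props(3)[OF V(1), of n] n2 by (simp add: Espan_def)
  qed
  have hi: "\<exists>y. y \<in> V j \<and> y \<in> supp ?q \<and> y \<notin> V (j - 1)" if j: "p < j" "j \<le> n" for j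
  proof (rule ccontr)
    assume neg: "\<not> ?thesis"
    obtain y where y: "y \<in> V j" "y \<notin> V (j - 1)" using gen[of j] j ip i by auto
    have "y \<in> ?D" using y(1) Fl_mono[OF V(1) j(2)] DV by auto
    then obtain c where c: "y - cscale c up \<in> cvs.span (e ` {1..?q})" using cvs.span_breakdown_eq by blast
    then have c': "y - cscale c up \<in> supp ?q" using spanq by simp
    have "p \<le> j - 1" "j - 1 \<le> n" using j by auto
    then have upj: "up \<in> V (j - 1)" using up(1) Fl_mono[OF V(1), of p "j - 1"] by auto
    have "y - cscale c up \<in> V j"
      using y(1) upj Fl_mono[OF V(1), of "j - 1" j] Fl_props(1)[OF V(1) j(2)] j(2)
      by (auto intro!: cvs.subspace_diff cvs.subspace_scale)
    then have "y - cscale c up \<in> V (j - 1)" using neg c' by blast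
    moreover have sub: "cvs.subspace (V (j - 1))" using Fl_props(1)[OF V(1), of "j - 1"] j by simp
    moreover have "cscale c up \<in> V (j - 1)" using cvs.subspace_scale[OF sub upj] .
    ultimately have "(y - cscale c up) + cscale c up \<in> V (j - 1)"
      using cvs.subspace_add by blast
    then show False using y(2) by simp
  qed
  define u where "u j = (if j = p then up else if j < p then (SOME y. y \<in> V j \<and> y \<notin> V (j - 1))
      else (SOME y. y \<in> V j \<and> y \<in> supp ?q \<and> y \<notin> V (j - 1)))" for j
  have ulo: "u j \<in> V j \<and> u j \<notin> V (j - 1)" if "j \<in> {1..n}" "j < p" for j
    using someI_ex[OF gen[OF that(1)]] that by (simp add: u_def)
  have uhi: "u j \<in> V j \<and> u j \<in> supp ?q \<and> u j \<notin> V (j - 1)" if "j \<in> {1..n}" "p < j" for j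
    using someI_ex[OF hi[of j]] that by (simp add: u_def)
  have "u p \<notin> V (p - 1)" using up(2) p2[of "p - 1"] ip i by (auto simp: u_def)
  have fr: "\<forall>j\<in>{1..n}. u j \<in> V j \<and> u j \<notin> V (j - 1)"
  proof
    fix j assume j: "j \<in> {1..n}"
    consider "j = p" | "j < p" | "p < j" by linarith
    then show "u j \<in> V j \<and> u j \<notin> V (j - 1)"
    proof cases
      case 1 then show ?thesis using \<open>u p \<notin> V (p - 1)\<close> up(1) by (simp add: u_def)
    next
      case 2 then show ?thesis using ulo j by blast
    next
      case 3 then show ?thesis using uhi j by blast
    qed
  qed
  have "flag_of n u = V" by (rule frame_flag[OF V(1) fr])
  moreover have "\<forall>l\<in>{1..n} - {p}. u l \<in> supp ?q"
  proof
    fix l assume l: "l \<in> {1..n} - {p}"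
    show "u l \<in> supp ?q"
    proof (cases "l < p")
      case True then show ?thesis using ulo[of l] p2[OF True] l by auto
    next
      case False then show ?thesis using uhi[of l] l by auto
    qed
  qed
  moreover have "u p \<notin> supp ?q" using up by (simp add: u_def)
  ultimately show ?thesis using that ip pn by blast
qed


definition poly3 :: "cvec \<Rightarrow> cvec \<Rightarrow> cvec \<Rightarrow> cvec \<Rightarrow> complex \<Rightarrow> cvec" where
  "poly3 v0 v1 v2 v3 t = v0 + cscale t v1 + cscale (t ^ 2) v2 + cscale (t ^ 3) v3"

lemma poly3_apply: "poly3 v0 v1 v2 v3 t m = v0 m + t * v1 m + t ^ 2 * v2 m + t ^ 3 * v3 m"
  by (simp add: poly3_def cscale_def)

lemma poly3_in: "cvs.subspace T \<Longrightarrow> v0 \<in> T \<Longrightarrow> v1 \<in> T \<Longrightarrow> v2 \<in> T \<Longrightarrow> v3 \<in> T \<Longrightarrow> poly3 v0 v1 v2 v3 t \<in> T"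
  unfolding poly3_def by (intro cvs.subspace_add cvs.subspace_scale) auto

lemma poly3_lim: "(tk \<longlonglongrightarrow> 0) \<Longrightarrow> (\<lambda>k. poly3 v0 v1 v2 v3 (tk k) m) \<longlonglongrightarrow> v0 m"
  unfolding poly3_apply by (auto intro!: tendsto_eq_intros)

lemma quad_roots_finite: "finite {t::complex. a + b * t + t ^ 2 = 0}"
proof (cases "{t::complex. a + b * t + t ^ 2 = 0} = {}")
  case True then show ?thesis by simp
next
  case False
  then obtain t1 where t1: "a + b * t1 + t1 ^ 2 = 0" by auto
  have "{t::complex. a + b * t + t ^ 2 = 0} \<subseteq> {t1, - b - t1}"
  proof
    fix t assume t: "t \<in> {t. a + b * t + t ^ 2 = 0}"
    have "(t - t1) * (t + t1 + b) = (a + b * t + t ^ 2) - (a + b * t1 + t1 ^ 2)"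
      by (simp add: algebra_simps power2_eq_square)
    then have "(t - t1) * (t + t1 + b) = 0" using t t1 by simp
    then have "t - t1 = 0 \<or> t + t1 + b = 0" by simp
    then show "t \<in> {t1, - b - t1}"
    proof
      assume "t - t1 = 0" then show ?thesis by simp
    next
      assume h: "t + t1 + b = 0"
      have "t = - b - t1" using h by algebra
      then show ?thesis by simp
    qed
  qed
  then show ?thesis by (rule finite_subset) simp
qed

lemma e_CN: "1 \<le> m \<Longrightarrow> m \<le> N \<Longrightarrow> e m \<in> CN N" by (auto simp: CN_def e_def)

lemma e_supp: "1 \<le> m \<Longrightarrow> m \<le> q \<Longrightarrow> e m \<in> supp q" by (auto simp: supp_def e_def)

locale constr =
  fixes n s i N p :: nat and u :: "nat \<Rightarrow> cvec" and \<alpha> :: "nat \<Rightarrow> complex"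
  assumes N: "N = n + s - 1" and n2: "2 \<le> n" and s: "n - 1 \<le> s" and i1: "1 \<le> i" and iN: "i \<le> n"
    and adm: "s = n - 1 \<Longrightarrow> 2 \<le> i"
    and ip: "i \<le> p" and pn: "p \<le> n"
    and uI: "\<forall>l\<in>{1..n} - {p}. u l \<in> supp (n - 1)" and up: "u p \<notin> supp (n - 1)"
    and uCN: "\<forall>l\<in>{1..n}. u l \<in> CN N"
    and xup: "xmap n (u p) = lc {1..i - 1} \<alpha> u"
begin

abbreviation "q \<equiv> n - 1"

definition \<sigma> :: "nat \<Rightarrow> nat" where
  "\<sigma> l = (if l < i then q + 1 - l else if l = i then q + 2 - p else q + 2 - l)"

definition Sl :: "nat \<Rightarrow> nat set" where
  "Sl j = (if j < i then {1..j} else {1..j} - {if j < p then i else p})"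

definition kk :: "nat \<Rightarrow> nat" where
  "kk j = (if j < i then q - j else q + 1 - j)"

lemma NN: "2 * q \<le> N" "n \<le> N" "q < N" "1 \<le> N" using N n2 s by auto

lemma sigma_img: assumes "j \<le> n" shows "\<sigma> ` Sl j = {kk j + 1..q}"
proof (cases "j < i")
  case True
  have "\<sigma> ` {1..j} = {q - j + 1..q}"
  proof
    show "\<sigma> ` {1..j} \<subseteq> {q - j + 1..q}" using True iN by (auto simp: \<sigma>_def)
    show "{q - j + 1..q} \<subseteq> \<sigma> ` {1..j}"
    proof
      fix m assume m: "m \<in> {q - j + 1..q}"
      have "\<sigma> (q + 1 - m) = m" "q + 1 - m \<in> {1..j}" using m True iN by (auto simp: \<sigma>_def)
      then show "m \<in> \<sigma> ` {1..j}" by (metis imageI)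
    qed
  qed
  then show ?thesis using True by (simp add: Sl_def kk_def)
next
  case False
  have img: "\<sigma> ` ({1..j} - {if j < p then i else p}) = {q + 2 - j..q}"
  proof
    show "\<sigma> ` ({1..j} - {if j < p then i else p}) \<subseteq> {q + 2 - j..q}"
    proof
      fix m assume "m \<in> \<sigma> ` ({1..j} - {if j < p then i else p})"
      then obtain l where l0: "l \<in> {1..j} - {if j < p then i else p}" "m = \<sigma> l" by blast
      then have l: "l \<in> {1..j}" "l \<noteq> (if j < p then i else p)" "m = \<sigma> l" by auto
      show "m \<in> {q + 2 - j..q}"
      proof (cases "l < i")
        case True then show ?thesis using l False iN assms by (auto simp: \<sigma>_def)
      next
        case False2: False
        show ?thesis
        proof (cases "l = i")
          case True
          then have "p \<le> j" "p \<noteq> i" using l by (auto split: if_splits)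
          then show ?thesis using l True ip pn assms i1 by (auto simp: \<sigma>_def)
        next
          case False3: False
          then show ?thesis using l False2 assms i1 by (auto simp: \<sigma>_def)
        qed
      qed
    qed
    show "{q + 2 - j..q} \<subseteq> \<sigma> ` ({1..j} - {if j < p then i else p})"
    proof
      fix m assume m: "m \<in> {q + 2 - j..q}"
      show "m \<in> \<sigma> ` ({1..j} - {if j < p then i else p})"
      proof (cases "q + 2 - i \<le> m")
        case True
        have "\<sigma> (q + 1 - m) = m" "q + 1 - m \<in> {1..j} - {if j < p then i else p}"
          using m True iN i1 ip False by (auto simp: \<sigma>_def)
        then show ?thesis by (metis imageI)
      next
        case False2: False
        let ?l = "q + 2 - m"
        have l: "i < ?l" "?l \<le> j" "1 \<le> m" using m False2 False assms iN i1 by auto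
        show ?thesis
        proof (cases "j \<ge> p \<and> ?l = p")
          case True
          have "\<sigma> i = m" "i \<in> {1..j} - {if j < p then i else p}" using True l m i1 by (auto simp: \<sigma>_def)
          then show ?thesis by (metis imageI)
        next
          case False3: False
          have "\<sigma> ?l = m" "?l \<in> {1..j} - {if j < p then i else p}" using False3 l m i1 by (auto simp: \<sigma>_def)
          then show ?thesis by (metis imageI)
        qed
      qed
    qed
  qed
  have "kk j + 1 = q + 2 - j" using False assms by (simp add: kk_def)
  then show ?thesis using img False by (simp add: Sl_def)
qed

lemma sigma_inj: assumes jn: "j \<le> n" shows "inj_on \<sigma> (Sl j)"
proof (rule inj_onI)
  fix a b assume a: "a \<in> Sl j" and b: "b \<in> Sl j" and e: "\<sigma> a = \<sigma> b"
  have ab: "1 \<le> a" "1 \<le> b" "a \<le> j" "b \<le> j" using a b by (auto simp: Sl_def split: if_splits)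
  have ni: "a = i \<Longrightarrow> j \<ge> p \<and> p \<noteq> i" "b = i \<Longrightarrow> j \<ge> p \<and> p \<noteq> i"
    "a = p \<Longrightarrow> j < p" "b = p \<Longrightarrow> j < p"
    using a b ip by (auto simp: Sl_def split: if_splits)
  show "a = b"
  proof (cases "a < i")
    case True
    then show ?thesis using e ab ni ip pn iN jn by (auto simp: \<sigma>_def split: if_splits)
  next
    case False
    then show ?thesis using e ab ni ip pn iN jn by (auto simp: \<sigma>_def split: if_splits; arith)
  qed
qed

lemma card_Sl: assumes "j \<le> n" shows "card (Sl j) = (if j < i then j else j - 1)"
proof (cases "j < i")
  case True then show ?thesis by (simp add: Sl_def)
next
  case False
  have "(if j < p then i else p) \<in> {1..j}" using False i1 ip by auto
  then show ?thesis using False by (simp add: Sl_def)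
qed

lemma Sl_sub: "Sl j \<subseteq> {1..j}" by (auto simp: Sl_def)

lemma Sl_not_p: "j \<le> n \<Longrightarrow> l \<in> Sl j \<Longrightarrow> l \<noteq> p"
  using ip by (auto simp: Sl_def split: if_splits)

lemma sigma_range1: assumes "l \<in> {1..n}" shows "1 \<le> \<sigma> l" "\<sigma> l \<le> q + 1"
  using assms ip pn by (auto simp: \<sigma>_def)

lemma sigma_range: assumes "j \<le> n" "l \<in> Sl j" shows "1 \<le> \<sigma> l" "\<sigma> l \<le> q"
proof -
  have "\<sigma> l \<in> {kk j + 1..q}" using sigma_img[OF assms(1)] assms(2) by blast
  then show "1 \<le> \<sigma> l" "\<sigma> l \<le> q" by auto
qed

definition b :: "nat \<Rightarrow> cvec" where "b l = e (\<sigma> l)"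

definition P1 :: cvec where
  "P1 = lc {1..i - 1} \<alpha> (\<lambda>l. lift n (b l)) + (if 2 * q < N then e N else lift n (u 1))"

definition P2 :: cvec where "P2 = (if 2 * q < N then 0 else lift n (b 1))"

definition A :: "complex \<Rightarrow> nat \<Rightarrow> cvec" where "A t l = u l + cscale t (b l)"

definition P :: "complex \<Rightarrow> cvec" where "P t = poly3 (u p) P1 P2 0 t"

definition U :: "complex \<Rightarrow> nat \<Rightarrow> cvec" where
  "U t l = (if l = p then P t else if l = i then poly3 (u i) (b i + u p) P1 P2 t else poly3 (u l) (b l) 0 0 t)"

lemma U_other: "l \<noteq> p \<Longrightarrow> l \<noteq> i \<Longrightarrow> U t l = A t l"
  by (simp add: U_def A_def poly3_def cscale_def fun_eq_iff)

lemma U_p: "U t p = P t" by (simp add: U_def)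

lemma U_i: "p \<noteq> i \<Longrightarrow> U t i = A t i + cscale t (P t)"
  using ip by (simp add: U_def A_def P_def poly3_def cscale_def fun_eq_iff algebra_simps power2_eq_square power3_eq_cube)

lemma U_lim: "(tk \<longlonglongrightarrow> 0) \<Longrightarrow> (\<lambda>k. U (tk k) l m) \<longlonglongrightarrow> u l m"
proof (cases "l = p")
  case True
  assume tk: "tk \<longlonglongrightarrow> 0"
  show ?thesis unfolding True U_p P_def using poly3_lim[OF tk] by simp
next
  case False
  assume tk: "tk \<longlonglongrightarrow> 0"
  show ?thesis using False poly3_lim[OF tk] by (cases "l = i") (simp_all add: U_def)
qed

lemma b_supp: "j \<le> n \<Longrightarrow> l \<in> Sl j \<Longrightarrow> b l \<in> supp q"
  using sigma_range by (simp add: b_def e_supp)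

lemma b_lo: "l \<in> {1..i - 1} \<Longrightarrow> b l \<in> supp q"
  using iN by (auto simp: b_def \<sigma>_def intro!: e_supp)

lemma A_supp: assumes "j \<le> n" "l \<in> Sl j" shows "A t l \<in> supp q"
proof -
  have "l \<in> {1..n} - {p}" using Sl_sub[of j] assms Sl_not_p[OF assms] by auto
  then have "u l \<in> supp q" using uI by blast
  then show ?thesis unfolding A_def using b_supp[OF assms] subspace_supp
    by (intro cvs.subspace_add cvs.subspace_scale) auto
qed

lemma A_lo: assumes "l \<in> {1..i - 1}" shows "A t l \<in> supp q"
proof -
  have "Sl (i - 1) = {1..i - 1}" using i1 by (simp add: Sl_def)
  then show ?thesis using A_supp[of "i - 1" l t] iN assms by simp
qed

lemma U_CN: assumes "l \<in> {1..n}" shows "U t l \<in> CN N"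
proof -
  have bCN: "b l' \<in> CN N" if "l' \<in> {1..n}" for l'
    using sigma_range1[OF that] NN by (auto simp: b_def intro!: e_CN)
  have liftCN: "lift n y \<in> CN N" for y using lift_CN NN n2 by auto
  have P1CN: "P1 \<in> CN N" unfolding P1_def using liftCN NN
    by (intro cvs.subspace_add[OF subspace_CN] lc_in_subspace[OF subspace_CN]) (auto intro!: e_CN)
  have P2CN: "P2 \<in> CN N" unfolding P2_def using liftCN cvs.subspace_0[OF subspace_CN] by auto
  have upCN: "u p \<in> CN N" using uCN ip pn i1 by auto
  show ?thesis unfolding U_def P_def
    using assms uCN bCN P1CN P2CN upCN i1 iN cvs.subspace_0[OF subspace_CN]
    by (auto intro!: poly3_in[OF subspace_CN] cvs.subspace_add[OF subspace_CN])
qed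

lemma xmap_A: "j \<le> n \<Longrightarrow> l \<in> Sl j \<Longrightarrow> xmap n (A t l) = 0"
  using A_supp xmap_kill by blast

lemma sN: "\<not> 2 * q < N \<Longrightarrow> 2 \<le> i" using N n2 s adm by auto

lemma xmap_P: "xmap n (P t) = lc {1..i - 1} \<alpha> (A t) + (if 2 * q < N then 0 else cscale t (A t 1))"
proof -
  have xl: "xmap n (lift n (b l)) = b l" if "l \<in> {1..i - 1}" for l using b_lo[OF that] by (rule xmap_lift)
  have xP1: "xmap n P1 = lc {1..i - 1} \<alpha> b + (if 2 * q < N then 0 else u 1)"
  proof (cases "2 * q < N")
    case True
    have "xmap n (e N) = 0" using True by (auto simp: xmap_def e_def fun_eq_iff)
    moreover have "lc {1..i - 1} \<alpha> (\<lambda>l. xmap n (lift n (b l))) = lc {1..i - 1} \<alpha> b"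
      using xl by (auto simp: lc_def intro!: ext sum.cong)
    ultimately show ?thesis using True by (simp add: P1_def xmap_add xmap_lc)
  next
    case False
    have "1 \<noteq> p" using sN[OF False] ip by simp
    then have "u 1 \<in> supp q" using uI n2 by auto
    then have "xmap n (lift n (u 1)) = u 1" by (rule xmap_lift)
    moreover have "lc {1..i - 1} \<alpha> (\<lambda>l. xmap n (lift n (b l))) = lc {1..i - 1} \<alpha> b"
      using xl by (auto simp: lc_def intro!: ext sum.cong)
    ultimately show ?thesis using False by (simp add: P1_def xmap_add xmap_lc)
  qed
  have xP2: "xmap n P2 = (if 2 * q < N then 0 else b 1)"
  proof (cases "2 * q < N")
    case True then show ?thesis by (simp add: P2_def xmap_zero)
  next
    case False
    have "1 \<in> {1..i - 1}" using sN[OF False] by simp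
    then show ?thesis using False xl by (simp add: P2_def)
  qed
  have "xmap n (P t) = xmap n (u p) + cscale t (xmap n P1) + cscale (t ^ 2) (xmap n P2) + cscale (t ^ 3) (xmap n 0)"
    by (simp only: P_def poly3_def xmap_add xmap_scale)
  then have "xmap n (P t) = xmap n (u p) + cscale t (xmap n P1) + cscale (t ^ 2) (xmap n P2)"
    by (simp add: xmap_zero cscale_def fun_eq_iff)
  also have "\<dots> = lc {1..i - 1} \<alpha> (A t) + (if 2 * q < N then 0 else cscale t (A t 1))"
    unfolding xup xP1 xP2
    by (auto simp: lc_def A_def cscale_def fun_eq_iff sum.distrib sum_distrib_left algebra_simps power2_eq_square)
  finally show ?thesis .
qed

lemma P_N: "P t N = u p N + t * P1 N + t ^ 2 * P2 N"
  by (simp add: P_def poly3_apply)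

lemma P_bad_finite: "finite {t. P t N = 0}"
proof (cases "2 * q < N")
  case True
  have "lift n y N = 0" for y using True by (simp add: lift_def)
  then have "P1 N = 1" "P2 N = 0" using True by (simp_all add: P1_def P2_def lc_def e_def)
  then have "{t. P t N = 0} \<subseteq> {- u p N}" by (auto simp: P_N add_eq_0_iff)
  then show ?thesis by (rule finite_subset) simp
next
  case False
  then have NE: "N = 2 * q" using NN by simp
  have i2: "2 \<le> i" using sN[OF False] .
  have s1: "\<sigma> 1 = q" using i2 by (simp add: \<sigma>_def)
  have "P2 = lift n (b 1)" using False by (simp add: P2_def)
  moreover have "lift n (b 1) N = b 1 (N - q)" using NN(2) NE by (simp add: lift_def)
  moreover have "N - q = q" using NE by simp
  ultimately have "P2 N = b 1 q" by simp
  also have "\<dots> = 1" using s1 by (simp add: b_def e_def)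
  finally have "P2 N = 1" .
  then have "{t. P t N = 0} = {t. u p N + P1 N * t + t ^ 2 = 0}" by (auto simp: P_N algebra_simps)
  then show ?thesis using quad_roots_finite by simp
qed

definition Q :: "complex \<Rightarrow> nat \<Rightarrow> cvec" where "Q t j = (if j < p then U t i else P t)"

definition G :: "complex \<Rightarrow> nat \<Rightarrow> cvec set" where "G t j = cvs.span (A t ` Sl j)"

definition good :: "complex \<Rightarrow> bool" where
  "good t \<longleftrightarrow> t \<noteq> 0 \<and> P t N \<noteq> 0 \<and>
     (\<forall>j\<le>n. \<forall>c. lc (Sl j) c (A t) \<in> supp (kk j) \<longrightarrow> (\<forall>l\<in>Sl j. c l = 0))"

lemma finite_Sl: "finite (Sl j)" by (simp add: Sl_def)

lemma bad_finite: "finite {t. \<not> good t}"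
proof -
  have TL: "finite {t. \<not> (\<forall>c. lc (Sl j) c (A t) \<in> supp (kk j) \<longrightarrow> (\<forall>l\<in>Sl j. c l = 0))}" if "j \<le> n" for j
  proof -
    have "A t = (\<lambda>l. u l + cscale t (e (\<sigma> l)))" for t by (simp add: A_def b_def fun_eq_iff)
    then show ?thesis using transv_finite[OF finite_Sl sigma_inj[OF that] sigma_img[OF that], of u] by simp
  qed
  have "{t. \<not> good t} \<subseteq> {0} \<union> {t. P t N = 0} \<union>
      (\<Union>j\<in>{..n}. {t. \<not> (\<forall>c. lc (Sl j) c (A t) \<in> supp (kk j) \<longrightarrow> (\<forall>l\<in>Sl j. c l = 0))})"
    by (auto simp: good_def)
  moreover have "finite ({0} \<union> {t. P t N = 0} \<union>
      (\<Union>j\<in>{..n}. {t. \<not> (\<forall>c. lc (Sl j) c (A t) \<in> supp (kk j) \<longrightarrow> (\<forall>l\<in>Sl j. c l = 0))}))"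
    using P_bad_finite TL by auto
  ultimately show ?thesis by (rule finite_subset)
qed

lemma flag_lo: assumes "j < i" shows "flag_of n (U t) j = G t j"
proof -
  have "U t ` {1..j} = A t ` Sl j"
    using assms ip by (auto simp: Sl_def U_other intro!: image_cong)
  then show ?thesis using assms iN by (simp add: flag_of_le G_def)
qed

lemma i_in_Sl: "p \<noteq> i \<Longrightarrow> p \<le> j \<Longrightarrow> j \<le> n \<Longrightarrow> i \<in> Sl j"
  using ip i1 by (auto simp: Sl_def)

lemma flag_hi: assumes j: "i \<le> j" "j \<le> n"
  shows "flag_of n (U t) j = cvs.span (insert (Q t j) (A t ` Sl j))"
proof -
  have "cvs.span (U t ` {1..j}) = cvs.span (insert (Q t j) (A t ` Sl j))"
    unfolding cvs.span_eq
  proof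
    show "U t ` {1..j} \<subseteq> cvs.span (insert (Q t j) (A t ` Sl j))"
    proof
      fix y assume "y \<in> U t ` {1..j}"
      then obtain l where l: "l \<in> {1..j}" "y = U t l" by auto
      show "y \<in> cvs.span (insert (Q t j) (A t ` Sl j))"
      proof (cases "l = p")
        case True
        then have "\<not> j < p" using l by auto
        then show ?thesis using True l by (auto simp: U_p Q_def intro: cvs.span_base)
      next
        case False
        show ?thesis
        proof (cases "l = i")
          case True
          show ?thesis
          proof (cases "j < p")
            case True
            then show ?thesis using \<open>l = i\<close> l by (auto simp: Q_def intro: cvs.span_base)
          next
            case False2: False
            have "i \<in> Sl j" using i_in_Sl[of j] False True False2 j by auto
            then have "A t i \<in> cvs.span (insert (Q t j) (A t ` Sl j))" by (auto intro: cvs.span_base)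
            moreover have "P t \<in> cvs.span (insert (Q t j) (A t ` Sl j))"
              using False2 by (auto simp: Q_def intro: cvs.span_base)
            ultimately show ?thesis using l True False
              by (auto simp: U_i intro!: cvs.span_add cvs.span_scale)
          qed
        next
          case False2: False
          have "l \<in> Sl j" using l False False2 by (auto simp: Sl_def)
          then show ?thesis using l False False2 by (auto simp: U_other intro: cvs.span_base)
        qed
      qed
    qed
    show "insert (Q t j) (A t ` Sl j) \<subseteq> cvs.span (U t ` {1..j})"
    proof
      fix y assume y: "y \<in> insert (Q t j) (A t ` Sl j)"
      show "y \<in> cvs.span (U t ` {1..j})"
      proof (cases "y = Q t j")
        case True
        show ?thesis
        proof (cases "j < p")
          case True
          then show ?thesis using \<open>y = Q t j\<close> i1 j by (auto simp: Q_def intro!: cvs.span_base)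
        next
          case False
          have "P t = U t p" by (simp add: U_p)
          then show ?thesis using \<open>y = Q t j\<close> False ip i1 by (auto simp: Q_def intro!: cvs.span_base)
        qed
      next
        case False
        then obtain l where l: "l \<in> Sl j" "y = A t l" using y by auto
        have lp: "l \<noteq> p" using Sl_not_p[OF j(2) l(1)] .
        have l1j: "l \<in> {1..j}" using l(1) Sl_sub[of j] by blast
        show ?thesis
        proof (cases "l = i")
          case False
          then show ?thesis using l lp l1j by (auto simp: U_other[symmetric] intro!: cvs.span_base)
        next
          case True
          then have pi: "p \<noteq> i" "p \<le> j" using l(1) j by (auto simp: Sl_def split: if_splits)
          have "A t i = U t i - cscale t (U t p)" using U_i[OF pi(1)] U_p by simp
          moreover have "U t i \<in> cvs.span (U t ` {1..j})" using i1 j by (auto intro!: cvs.span_base)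
          moreover have "U t p \<in> cvs.span (U t ` {1..j})" using pi ip i1 by (auto intro!: cvs.span_base)
          ultimately show ?thesis using l True by (auto intro!: cvs.span_diff cvs.span_scale)
        qed
      qed
    qed
  qed
  then show ?thesis using j by (simp add: flag_of_le)
qed

lemma G_supp: "j \<le> n \<Longrightarrow> G t j \<subseteq> supp q"
  unfolding G_def using A_supp by (intro cvs.span_minimal subspace_supp) auto

lemma supp_q_N: "y \<in> supp q \<Longrightarrow> y N = 0" using NN by (auto simp: supp_def)

lemma Q_N: assumes "good t" "i \<le> j" "j \<le> n" shows "Q t j N \<noteq> 0"
proof (cases "j < p")
  case True
  then have pi: "p \<noteq> i" using assms by auto
  have "A t i \<in> supp q" using A_supp[OF pn i_in_Sl[OF pi order_refl pn]] .
  then have "A t i N = 0" by (rule supp_q_N)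
  then have "U t i N = t * P t N" using U_i[OF pi] by (simp add: cscale_def)
  then show ?thesis using True assms(1) by (simp add: Q_def good_def)
next
  case False then show ?thesis using assms(1) by (simp add: Q_def good_def)
qed

lemma G_indep: assumes "good t" "j \<le> n" shows "indep (Sl j) (A t)"
  unfolding indep_def using assms cvs.subspace_0[OF subspace_supp] by (auto simp: good_def)

lemma G_dim: assumes "good t" "j \<le> n" shows "cvs.dim (G t j) = card (Sl j)"
  unfolding G_def using indep_dim[OF finite_Sl G_indep[OF assms]] .

lemma G_transv: assumes "good t" "j \<le> n" shows "G t j \<inter> supp (kk j) \<subseteq> {0}"
proof
  fix y assume y: "y \<in> G t j \<inter> supp (kk j)"
  then obtain c where c: "y = lc (Sl j) c (A t)" using in_span_image_iff[OF finite_Sl] by (auto simp: G_def)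
  then have "\<forall>l\<in>Sl j. c l = 0" using y assms by (auto simp: good_def)
  then show "y \<in> {0}" using c lc_zero_coeff by auto
qed

lemma hi_int: assumes g: "good t" and j: "i \<le> j" "j \<le> n"
  shows "flag_of n (U t) j \<inter> supp (N - 1) = G t j"
proof
  show "G t j \<subseteq> flag_of n (U t) j \<inter> supp (N - 1)"
  proof -
    have "G t j \<subseteq> flag_of n (U t) j" unfolding flag_hi[OF j] G_def by (intro cvs.span_mono) auto
    moreover have "q \<le> N - 1" using NN by simp
    then have "G t j \<subseteq> supp (N - 1)" using G_supp[OF j(2), of t] supp_mono[of q "N - 1"] by blast
    ultimately show ?thesis by auto
  qed
  show "flag_of n (U t) j \<inter> supp (N - 1) \<subseteq> G t j"
  proof
    fix y assume y: "y \<in> flag_of n (U t) j \<inter> supp (N - 1)"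
    then have "y \<in> cvs.span (insert (Q t j) (A t ` Sl j))" using flag_hi[OF j] by auto
    then obtain c where c: "y - cscale c (Q t j) \<in> G t j" unfolding G_def using cvs.span_breakdown_eq by blast
    have "(y - cscale c (Q t j)) N = 0" using G_supp[OF j(2)] c supp_q_N by blast
    moreover have "y N = 0" using y NN supp_pred[of y N] by (auto simp: supp_def)
    ultimately have "c * Q t j N = 0" by (simp add: cscale_def)
    then have "c = 0" using Q_N[OF g j] by simp
    moreover have "cscale 0 (Q t j) = 0" by (simp add: cscale_def fun_eq_iff)
    ultimately show "y \<in> G t j" using c by simp
  qed
qed

end


context constr begin

lemma good_in: assumes g: "good t"
  shows "flag_of n (U t) \<in> schubert_cell N n (wi N n i) \<inter> Yfib n s"
proof -
  let ?F = "flag_of n (U t)"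
  have UCN: "\<forall>l\<in>{1..n}. U t l \<in> CN N" using U_CN by blast
  have ni: "\<not> n < p" using pn by simp
  have Qn: "Q t n = P t" using ni by (simp add: Q_def)
  have cSn: "card (Sl n) = n - 1" using card_Sl[of n] iN by simp
  have dGn: "cvs.dim (G t n) = n - 1" using G_dim[OF g order_refl] cSn by simp
  have Pnot: "P t \<notin> G t n"
  proof
    assume "P t \<in> G t n" then have "P t N = 0" using G_supp[of n t] supp_q_N by blast
    then show False using g by (simp add: good_def)
  qed
  have Fn: "?F n = cvs.span (insert (P t) (A t ` Sl n))" using flag_hi[OF iN order_refl] Qn by simp
  have indU: "indep {1..n} (U t)"
  proof (rule dim_indep)
    have ge: "cvs.dim (cvs.span (A t ` Sl n)) + 1 \<le> cvs.dim (cvs.span (insert (P t) (A t ` Sl n)))"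
      by (rule dim_insert_ge) (use Pnot finite_Sl in \<open>auto simp: G_def\<close>)
    have "cvs.dim (cvs.span (U t ` {1..n})) = cvs.dim (cvs.span (insert (P t) (A t ` Sl n)))"
      using Fn by (simp add: flag_of_le)
    moreover have "cvs.dim (cvs.span (U t ` {1..n})) \<le> card (U t ` {1..n})"
      by (simp add: cvs.dim_le_card')
    moreover have "card (U t ` {1..n}) \<le> n" using card_image_le[of "{1..n}" "U t"] by simp
    ultimately show "cvs.dim (cvs.span (U t ` {1..n})) = card {1..n}"
      using ge dGn n2 by (simp add: G_def)
  qed (simp)
  have FFl: "?F \<in> Fl N n" by (rule flag_of_Fl[OF UCN indU])
  show ?thesis
  proof (rule criterion[OF N n2 s i1 iN UCN indU])
    fix j assume j: "j < i"
    have "?F j = G t j" by (rule flag_lo[OF j])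
    moreover have "kk j = n - 1 - j" using j by (simp add: kk_def)
    ultimately show "?F j \<subseteq> supp (n - 1) \<and> ?F j \<inter> supp (n - 1 - j) \<subseteq> {0}"
      using G_supp[of j t] G_transv[OF g, of j] j iN by auto
  next
    fix j assume j: "i \<le> j" "j \<le> n"
    have eq: "?F j \<inter> supp (N - 1) = G t j" by (rule hi_int[OF g j])
    have "cvs.dim (?F j \<inter> supp (N - 1)) = j - 1" using eq G_dim[OF g j(2)] card_Sl[OF j(2)] j by simp
    moreover have "?F j \<inter> supp (n - j) \<subseteq> {0}"
    proof -
      have "n - j \<le> N - 1" using NN j i1 by simp
      moreover have "kk j = n - j" using j n2 by (simp add: kk_def)
      ultimately have "?F j \<inter> supp (n - j) \<subseteq> G t j \<inter> supp (kk j)"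
        using eq supp_mono[of "n - j" "N - 1"] by auto
      then show ?thesis using G_transv[OF g j(2)] by blast
    qed
    ultimately show "?F j \<inter> supp (N - 1) \<subseteq> supp (n - 1) \<and> cvs.dim (?F j \<inter> supp (N - 1)) = j - 1
        \<and> ?F j \<inter> supp (n - j) \<subseteq> {0}" using eq G_supp[OF j(2)] by simp
  next
    have "G t n = supp (n - 1)"
      by (rule dim_eq_subset) (use G_supp[of n t] dGn dim_Espan[of "n - 1"] in
          \<open>auto simp: Espan_eq G_def FD_supp cvs.subspace_span\<close>)
    moreover have "G t n \<subseteq> ?F n" unfolding Fn G_def by (intro cvs.span_mono) auto
    ultimately show "supp (n - 1) \<subseteq> ?F n" by simp
  next
    fix j assume j: "j \<le> n"
    show "xmap n ` ?F j \<subseteq> ?F j"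
    proof (cases "j < i")
      case True
      have "?F j \<subseteq> supp (n - 1)" using flag_lo[OF True] G_supp[of j t] j by simp
      then show ?thesis using xmap_kill cvs.subspace_0[OF Fl_props(1)[OF FFl j]] by fastforce
    next
      case False
      have i1n: "i - 1 \<le> n" using iN by simp
      have F0: "?F (i - 1) = cvs.span (A t ` {1..i - 1})"
        using flag_lo[of "i - 1" t] i1 by (simp add: G_def Sl_def)
      have mono: "?F (i - 1) \<subseteq> ?F j" using Fl_mono[OF FFl, of "i - 1" j] False j by simp
      have xP: "xmap n (P t) \<in> ?F (i - 1)"
      proof -
        have "lc {1..i - 1} \<alpha> (A t) \<in> ?F (i - 1)" unfolding F0 by (rule lc_in_span) simp
        moreover have "(if 2 * q < N then 0 else cscale t (A t 1)) \<in> ?F (i - 1)"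
        proof (cases "2 * q < N")
          case True then show ?thesis using cvs.subspace_0[OF Fl_props(1)[OF FFl i1n]] by simp
        next
          case False
          have "1 \<in> {1..i - 1}" using sN[OF False] by simp
          then have "A t 1 \<in> cvs.span (A t ` {1..i - 1})" by (intro cvs.span_base) simp
          then have "cscale t (A t 1) \<in> cvs.span (A t ` {1..i - 1})" by (rule cvs.span_scale)
          then show ?thesis using False unfolding F0 by simp
        qed
        ultimately show ?thesis unfolding xmap_P using cvs.subspace_add[OF Fl_props(1)[OF FFl i1n]] by blast
      qed
      have "xmap n (U t l) \<in> ?F (i - 1)" if l: "l \<in> {1..j}" for l
      proof (cases "l = p")
        case True then show ?thesis using xP by (simp add: U_p)
      next
        case False
        show ?thesis
        proof (cases "l = i")
          case True
          have "p \<noteq> i" using False True by simp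
          then have "i \<in> Sl n" using i_in_Sl[of n] pn by simp
          then have "A t i \<in> supp q" using A_supp[of n i t] by simp
          then have "xmap n (U t i) = cscale t (xmap n (P t))"
            using U_i[of t] False True by (simp add: xmap_add xmap_scale xmap_kill)
          then show ?thesis using True xP Fl_props(1)[OF FFl i1n] by (simp add: cvs.subspace_scale)
        next
          case False2: False
          have "l \<in> Sl n" using l j False False2 by (auto simp: Sl_def)
          then have "xmap n (U t l) = 0" using U_other[OF False False2] xmap_A[of n l t] by simp
          then show ?thesis using cvs.subspace_0[OF Fl_props(1)[OF FFl i1n]] by simp
        qed
      qed
      then have "xmap n ` (U t ` {1..j}) \<subseteq> ?F j" using mono by auto
      then show ?thesis unfolding flag_of_le[OF j]
        by (rule xmap_span_sub) (rule cvs.subspace_span)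
    qed
  qed
qed

end


lemma good_seq:
  assumes "finite {t::complex. \<not> G t}"
  obtains tk where "\<And>k. G (tk k)" "tk \<longlonglongrightarrow> 0"
proof -
  have ex: "\<exists>t. G t \<and> norm t \<le> inverse (real (Suc k))" for k
  proof (rule ccontr)
    assume no: "\<not> ?thesis"
    let ?f = "\<lambda>m. complex_of_real (inverse (real (Suc m)))"
    have "?f ` {k..} \<subseteq> {t. \<not> G t}"
    proof
      fix t assume "t \<in> ?f ` {k..}"
      then obtain m where m: "m \<ge> k" "t = ?f m" by auto
      have "norm t = \<bar>inverse (real (Suc m))\<bar>" using m(2) by (simp only: norm_of_real)
      also have "\<dots> = inverse (real (Suc m))" by simp
      also have "\<dots> \<le> inverse (real (Suc k))" using m(1) by (intro le_imp_inverse_le) auto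
      finally have "norm t \<le> inverse (real (Suc k))" .
      then show "t \<in> {t. \<not> G t}" using no by auto
    qed
    moreover have "inj_on ?f {k..}" by (auto simp: inj_on_def)
    then have "infinite (?f ` {k..})" using finite_imageD infinite_Ici by blast
    ultimately show False using assms finite_subset by blast
  qed
  define tk where "tk k = (SOME t. G t \<and> norm t \<le> inverse (real (Suc k)))" for k
  have tk: "G (tk k) \<and> norm (tk k) \<le> inverse (real (Suc k))" for k
    unfolding tk_def by (rule someI_ex[OF ex])
  have "tk \<longlonglongrightarrow> 0"
  proof (rule tendsto_0_le[OF LIMSEQ_inverse_real_of_nat, of _ 1])
    show "\<forall>\<^sub>F x in sequentially. norm (tk x) \<le> norm (inverse (real (Suc x))) * 1"
      using tk by (intro always_eventually) simp
  qed
  then show ?thesis using that tk by blast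
qed

theorem theorem3p1:
  fixes n s i :: nat
  assumes "n \<ge> 2" and "s \<ge> n - 1"
    and "(s > n - 1 \<and> 1 \<le> i \<and> i \<le> n) \<or> (s = n - 1 \<and> 2 \<le> i \<and> i \<le> n)"
  shows "Kcomp n s i =
    {V \<in> Fl (n + s - 1) n.
       V (i - 1) \<subseteq> xmap n ` CN (n + s - 1) \<and>
       xmap n ` CN (n + s - 1) \<subseteq> V n \<and>
       V n \<subseteq> {v \<in> CN (n + s - 1). xmap n v \<in> V (i - 1)}}"
proof -
  define N where "N = n + s - 1"
  have n2: "2 \<le> n" and s: "n - 1 \<le> s" using assms by auto
  have i1: "1 \<le> i" and iN: "i \<le> n" and adm: "s = n - 1 \<Longrightarrow> 2 \<le> i" using assms(3) by auto
  have NN: "2 * (n - 1) \<le> N" "n \<le> N" using N_def n2 s by auto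
  have I: "xmap n ` CN N = supp (n - 1)" using I_eq[of n N] NN n2 by simp
  let ?A = "schubert_cell N n (wi N n i) \<inter> Yfib n s"
  show ?thesis unfolding N_def[symmetric] I
  proof
    show "Kcomp n s i \<subseteq> {V \<in> Fl N n. V (i - 1) \<subseteq> supp (n - 1) \<and> supp (n - 1) \<subseteq> V n \<and>
        V n \<subseteq> {v \<in> CN N. xmap n v \<in> V (i - 1)}}"
    proof
      fix V assume V: "V \<in> Kcomp n s i"
      then have VF: "V \<in> Fl N n" and VC: "V \<in> flag_closure N n ?A"
        unfolding Kcomp_def N_def flag_closure_def by auto
      obtain U u where U: "\<And>k. flag_of n (U k) \<in> ?A" and u: "flag_of n u = V"
        and lim: "\<forall>j m. (\<lambda>k. U k j m) \<longlonglongrightarrow> u j m"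
        using VC unfolding flag_closure_def by blast
      have UF: "flag_of n (U k) \<in> Fl N n" for k using U[of k] by (simp add: schubert_cell_def)
      have UZ: "flag_of n (U k) (i - 1) \<subseteq> supp (n - 1) \<and> supp (n - 1) \<subseteq> flag_of n (U k) n \<and>
          flag_of n (U k) n \<subseteq> {v \<in> CN N. xmap n v \<in> flag_of n (U k) (i - 1)}" for k
        using SY_in_Z[OF N_def n2 s i1 iN, of "flag_of n (U k)"] U[of k] by auto
      have "flag_of n u (i - 1) \<subseteq> supp (n - 1)" "supp (n - 1) \<subseteq> flag_of n u n"
        "flag_of n u n \<subseteq> {v \<in> CN N. xmap n v \<in> flag_of n u (i - 1)}"
        using Z_closed[OF i1 iN _ UF UZ lim] VF u by auto
      then show "V \<in> {V \<in> Fl N n. V (i - 1) \<subseteq> supp (n - 1) \<and> supp (n - 1) \<subseteq> V n \<and>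
        V n \<subseteq> {v \<in> CN N. xmap n v \<in> V (i - 1)}}" using VF u by simp
    qed
    show "{V \<in> Fl N n. V (i - 1) \<subseteq> supp (n - 1) \<and> supp (n - 1) \<subseteq> V n \<and>
        V n \<subseteq> {v \<in> CN N. xmap n v \<in> V (i - 1)}} \<subseteq> Kcomp n s i"
    proof
      fix V assume "V \<in> {V \<in> Fl N n. V (i - 1) \<subseteq> supp (n - 1) \<and> supp (n - 1) \<subseteq> V n \<and>
        V n \<subseteq> {v \<in> CN N. xmap n v \<in> V (i - 1)}}"
      then have V: "V \<in> Fl N n" "V (i - 1) \<subseteq> supp (n - 1)" "supp (n - 1) \<subseteq> V n"
        "V n \<subseteq> {v \<in> CN N. xmap n v \<in> V (i - 1)}" by auto
      have VY: "V \<in> Yfib n s" by (rule Z_in_Y[OF N_def n2 s i1 iN V])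
      obtain u p where u: "flag_of n u = V" "i \<le> p" "p \<le> n"
        "\<forall>l\<in>{1..n} - {p}. u l \<in> supp (n - 1)" "u p \<notin> supp (n - 1)"
        using Z_frame[OF n2 NN(2) i1 iN V(1-3)] by blast
      have uF: "flag_of n u \<in> Fl N n" using u(1) V(1) by simp
      have uCN: "\<forall>l\<in>{1..n}. u l \<in> CN N" using Fl_flag_of(2)[OF uF order_refl] .
      have "u p \<in> cvs.span (u ` {1..n})" using u(2,3) i1 by (intro cvs.span_base) auto
      then have "u p \<in> V n" using u(1) flag_of_le[of n n u] by simp
      then have "xmap n (u p) \<in> V (i - 1)" using V(4) by auto
      moreover have "flag_of n u (i - 1) = cvs.span (u ` {1..i - 1})" using iN by (intro flag_of_le) simp
      ultimately have "xmap n (u p) \<in> cvs.span (u ` {1..i - 1})" using u(1) by simp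
      then obtain \<alpha> where \<alpha>: "xmap n (u p) = lc {1..i - 1} \<alpha> u" using in_span_image_iff[of "{1..i - 1}"] by auto
      interpret C: constr n s i N p u \<alpha>
        by unfold_locales (use N_def n2 s i1 iN adm u uCN \<alpha> in auto)
      obtain tk where tk: "\<And>k. C.good (tk k)" "tk \<longlonglongrightarrow> 0"
        using good_seq[OF C.bad_finite] by blast
      have "V \<in> flag_closure N n ?A"
        unfolding flag_closure_def
      proof (intro CollectI conjI exI)
        show "V \<in> Fl N n" by (rule V(1))
        show "\<forall>k. flag_of n (C.U (tk k)) \<in> ?A" using C.good_in tk(1) by blast
        show "flag_of n u = V" by (rule u(1))
        show "\<forall>j m. (\<lambda>k. C.U (tk k) j m) \<longlonglongrightarrow> u j m" using C.U_lim[OF tk(2)] by blast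
      qed
      then show "V \<in> Kcomp n s i" using VY unfolding Kcomp_def N_def by simp
    qed
  qed
qed


end
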